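(* Let $H$ be a connected graph, $\{G_n\}$ a sequence of graphs, $p_n\in(0,1)$ with $\limsup_np_n<1$, and $\mathrm{Var}[T(H,G_n)]>0$ for all $n$. Fix $M>0$ and an integer $R\ge1$. Then $$\limsup_{n\to\infty}\left|\mathbb E\left[\left(\frac{T_M^\circ(H,G_n)-\mathbb E[T_M^\circ(H,G_n)]}{\sqrt{\mathrm{Var}[T(H,G_n)]}}\right)^R\right]\right|\lesssim_{H,M,R}1.$$
   Context: $G_n$ is a simple labeled graph on $V(G_n)=\{1,\dots,|V(G_n)|\}$ with adjacency $(a_{ij})$; $H=(V(H),E(H))$ with $|Aut(H)|$ automorphisms. $V(G_n)_k$ is the set of $k$-tuples of distinct vertices, $\bar{\mathbf s}$ the set of entries. $M_H(\mathbf s)=\prod_{(i,j)\in E(H)}a_{s_is_j}$, $t_H(A)=\frac1{|Aut(H)|}\sum_{\mathbf s:\bar{\mathbf s}\supseteq A}M_H(\mathbf s)$. $\{X_v\}$ i.i.d. Bernoulli$(p_n)$, $X_{\mathbf s}=\prod_uX_{s_u}$, $T(H,G_n)=\frac1{|Aut(H)|}\sum_{\mathbf s}M_H(\mathbf s)X_{\mathbf s}$. For $M>0$, $\mathcal C_M(A)$ is the condition $t_H(A)^2>Mp_n^{2|A|-2|V(H)|}\mathrm{Var}[T(H,G_n)]$, and $\mathbf 1\{\mathcal C_M(\mathbf s)\}=1$ iff $\mathcal C_M(A)$ fails for all nonempty $A\subseteq\bar{\mathbf s}$. $T_M^\circ(H,G_n)=\frac1{|Aut(H)|}\sum_{\mathbf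 s}M_H(\mathbf s)X_{\mathbf s}\mathbf 1\{\mathcal C_M(\mathbf s)\}$. $\lesssim_{H,M,R}1$ means bounded by a constant depending only on $H,M,R$. *)

theory Defs
  imports "HOL-Probability.Probability" "HOL-Combinatorics.Permutations"
begin

definition simple_graph :: "nat set \<Rightarrow> (nat \<Rightarrow> nat \<Rightarrow> bool) \<Rightarrow> bool" where
  "simple_graph V E \<longleftrightarrow> (\<forall>i\<in>V. \<forall>j\<in>V. E i j \<longleftrightarrow> E j i) \<and> (\<forall>i\<in>V. \<not> E i i)"

definition connected_graph :: "nat \<Rightarrow> (nat \<Rightarrow> nat \<Rightarrow> bool) \<Rightarrow> bool" where
  "connected_graph h E \<longleftrightarrow> simple_graph {..<h} E \<and> 0 < h \<and>
     (\<forall>i<h. \<forall>j<h. (\<lambda>x y. x < h \<and> y < h \<and> E x y)\<^sup>*\<^sup>* i j)"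

definition aut_card :: "nat \<Rightarrow> (nat \<Rightarrow> nat \<Rightarrow> bool) \<Rightarrow> nat" where
  "aut_card h E = card {\<sigma>. \<sigma> permutes {..<h} \<and> (\<forall>i<h. \<forall>j<h. E (\<sigma> i) (\<sigma> j) \<longleftrightarrow> E i j)}"

definition edges :: "nat \<Rightarrow> (nat \<Rightarrow> nat \<Rightarrow> bool) \<Rightarrow> (nat \<times> nat) set" where
  "edges h E = {(i, j). i < h \<and> j < h \<and> i < j \<and> E i j}"

definition tuples :: "nat \<Rightarrow> nat \<Rightarrow> (nat \<Rightarrow> nat) set" where
  "tuples h N = {s. s \<in> {..<h} \<rightarrow>\<^sub>E {1..N} \<and> inj_on s {..<h}}"

definition hom_weight :: "nat \<Rightarrow> (nat \<Rightarrow> nat \<Rightarrow> bool) \<Rightarrow> (nat \<Rightarrow> nat \<Rightarrow> bool) \<Rightarrow> (nat \<Rightarrow> nat) \<Rightarrow> real" where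
  "hom_weight h EH a s = (\<Prod>(i, j)\<in>edges h EH. of_bool (a (s i) (s j)))"

definition X_tuple :: "nat \<Rightarrow> (nat \<Rightarrow> bool) \<Rightarrow> (nat \<Rightarrow> nat) \<Rightarrow> real" where
  "X_tuple h x s = (\<Prod>u<h. of_bool (x (s u)))"

definition T_count :: "nat \<Rightarrow> (nat \<Rightarrow> nat \<Rightarrow> bool) \<Rightarrow> nat \<Rightarrow> (nat \<Rightarrow> nat \<Rightarrow> bool) \<Rightarrow> (nat \<Rightarrow> bool) \<Rightarrow> real" where
  "T_count h EH N a x = (1 / real (aut_card h EH)) *
     (\<Sum>s\<in>tuples h N. hom_weight h EH a s * X_tuple h x s)"

definition vertex_pmf :: "nat \<Rightarrow> real \<Rightarrow> (nat \<Rightarrow> bool) pmf" where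
  "vertex_pmf N p = Pi_pmf {1..N} False (\<lambda>_. bernoulli_pmf p)"

definition varT :: "nat \<Rightarrow> (nat \<Rightarrow> nat \<Rightarrow> bool) \<Rightarrow> nat \<Rightarrow> (nat \<Rightarrow> nat \<Rightarrow> bool) \<Rightarrow> real \<Rightarrow> real" where
  "varT h EH N a p = measure_pmf.variance (vertex_pmf N p) (T_count h EH N a)"

definition t_H :: "nat \<Rightarrow> (nat \<Rightarrow> nat \<Rightarrow> bool) \<Rightarrow> nat \<Rightarrow> (nat \<Rightarrow> nat \<Rightarrow> bool) \<Rightarrow> nat set \<Rightarrow> real" where
  "t_H h EH N a A = (1 / real (aut_card h EH)) *
     (\<Sum>s\<in>{s\<in>tuples h N. A \<subseteq> s ` {..<h}}. hom_weight h EH a s)"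

definition cond_C :: "real \<Rightarrow> nat \<Rightarrow> (nat \<Rightarrow> nat \<Rightarrow> bool) \<Rightarrow> nat \<Rightarrow> (nat \<Rightarrow> nat \<Rightarrow> bool) \<Rightarrow> real \<Rightarrow> nat set \<Rightarrow> bool" where
  "cond_C M h EH N a p A \<longleftrightarrow>
     (t_H h EH N a A)\<^sup>2 > M * p powi (2 * int (card A) - 2 * int h) * varT h EH N a p"

definition good_tuple :: "real \<Rightarrow> nat \<Rightarrow> (nat \<Rightarrow> nat \<Rightarrow> bool) \<Rightarrow> nat \<Rightarrow> (nat \<Rightarrow> nat \<Rightarrow> bool) \<Rightarrow> real \<Rightarrow> (nat \<Rightarrow> nat) \<Rightarrow> bool" where
  "good_tuple M h EH N a p s \<longleftrightarrow>
     (\<forall>A. A \<noteq> {} \<and> A \<subseteq> s ` {..<h} \<longrightarrow> \<not> cond_C M h EH N a p A)"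

definition T_trunc :: "real \<Rightarrow> nat \<Rightarrow> (nat \<Rightarrow> nat \<Rightarrow> bool) \<Rightarrow> nat \<Rightarrow> (nat \<Rightarrow> nat \<Rightarrow> bool) \<Rightarrow> real \<Rightarrow> (nat \<Rightarrow> bool) \<Rightarrow> real" where
  "T_trunc M h EH N a p x = (1 / real (aut_card h EH)) *
     (\<Sum>s\<in>tuples h N. hom_weight h EH a s * X_tuple h x s * of_bool (good_tuple M h EH N a p s))"

end

theory Submission
  imports Defs
begin


lemma sum_PiE_insert:
  assumes "finite J" "j \<notin> J"
  shows "(\<Sum>\<sigma>\<in>PiE (insert j J) B. f \<sigma>) = (\<Sum>\<pi>\<in>B j. \<Sum>\<tau>\<in>PiE J B. f (\<tau>(j:=\<pi>)))"
proof -
  have inj: "inj_on (\<lambda>(y, g). g(j := y)) (B j \<times> PiE J B)"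
  proof (rule inj_onI, clarify)
    fix y g y' g'
    assume g: "g \<in> PiE J B" and g': "g' \<in> PiE J B" and eq: "g(j := y) = g'(j := y')"
    have "y = y'" using fun_cong[OF eq, of j] by simp
    moreover have "g = g'"
    proof
      fix x show "g x = g' x"
      proof (cases "x = j")
        case True thus ?thesis using g g' assms(2) by (simp add: PiE_def extensional_def)
      next
        case False thus ?thesis using fun_cong[OF eq, of x] by simp
      qed
    qed
    ultimately show "y = y' \<and> g = g'" by simp
  qed
  have "(\<Sum>\<sigma>\<in>PiE (insert j J) B. f \<sigma>) = (\<Sum>x\<in>B j \<times> PiE J B. f ((\<lambda>(y, g). g(j := y)) x))"
    unfolding PiE_insert_eq by (rule sum.reindex[OF inj, unfolded comp_def])
  also have "\<dots> = (\<Sum>\<pi>\<in>B j. \<Sum>\<tau>\<in>PiE J B. f (\<tau>(j:=\<pi>)))"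
    unfolding sum.cartesian_product by (simp add: case_prod_unfold cong: if_cong)
  finally show ?thesis .
qed

lemma sum_sq_aux: "(\<Sum>a\<in>A. \<Sum>b\<in>A. (c::real) * (f a * f b)) = c * (sum f A)^2"
proof -
  have "c * (sum f A)^2 = c * (\<Sum>a\<in>A. \<Sum>b\<in>A. f a * f b)"
    by (simp add: power2_eq_square sum_product)
  also have "\<dots> = (\<Sum>a\<in>A. \<Sum>b\<in>A. c * (f a * f b))"
    by (simp add: sum_distrib_left)
  finally show ?thesis by simp
qed

lemma sum_filter_mult: "finite A \<Longrightarrow> (\<Sum>x\<in>A. of_bool (c x) * (f x * (K::real))) = (\<Sum>x\<in>{x\<in>A. c x}. f x) * K"
proof -
  assume A: "finite A"
  have "(\<Sum>x\<in>{x\<in>A. c x}. f x) * K = (\<Sum>x\<in>A. if c x then f x else 0) * K"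
    by (simp only: sum.inter_filter[OF A])
  also have "\<dots> = (\<Sum>x\<in>A. (if c x then f x else 0) * K)" by (rule sum_distrib_right)
  also have "\<dots> = (\<Sum>x\<in>A. of_bool (c x) * (f x * K))" by (rule sum.cong) auto
  finally show ?thesis by simp
qed

lemma alg1: "(\<Sum>t\<in>T. (f::real) * g t * (a + (\<Sum>i\<in>I. b i t))) = a * (f * sum g T) + (\<Sum>i\<in>I. \<Sum>t\<in>T. f * (b i t * g t))"
proof -
  have "(\<Sum>t\<in>T. f * g t * (a + (\<Sum>i\<in>I. b i t))) = (\<Sum>t\<in>T. a * (f * g t) + (\<Sum>i\<in>I. f * (b i t * g t)))"
    by (rule sum.cong) (simp_all add: distrib_left sum_distrib_left sum_distrib_right mult_ac)
  also have "\<dots> = a * (f * sum g T) + (\<Sum>t\<in>T. \<Sum>i\<in>I. f * (b i t * g t))"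
    by (simp add: sum.distrib sum_distrib_left)
  also have "\<dots> = a * (f * sum g T) + (\<Sum>i\<in>I. \<Sum>t\<in>T. f * (b i t * g t))"
    by (subst sum.swap) simp
  finally show ?thesis .
qed

lemma alg2: "(\<Sum>t\<in>T. (f::real) * (of_bool (c \<and> d t) * g t)) = of_bool c * (f * (\<Sum>t\<in>T. of_bool (d t) * g t))"
  by (cases c) (simp_all add: sum_distrib_left)

fun Cb :: "nat \<Rightarrow> nat \<Rightarrow> nat \<Rightarrow> real" where
  "Cb h 0 w = 1"
| "Cb h (Suc n) w = 2^w * Cb h n (w+h) + real n * (1 + 2^(2*w+h)) * Cb h (n - 1) (w + 2*h)"

lemma Cb_nonneg: "0 \<le> Cb h n w"
  by (induction h n w rule: Cb.induct) auto

locale pieces =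
  fixes P :: "'a set" and S :: "'a \<Rightarrow> nat set" and \<phi> :: "'a \<Rightarrow> real"
    and q L V :: real and h :: nat and U :: "nat set"
  assumes finP: "finite P" and finU: "finite U"
    and SU: "\<And>\<pi>. \<pi> \<in> P \<Longrightarrow> S \<pi> \<subseteq> U"
    and Scard: "\<And>\<pi>. \<pi> \<in> P \<Longrightarrow> card (S \<pi>) \<le> h"
    and \<phi>nn: "\<And>\<pi>. \<pi> \<in> P \<Longrightarrow> 0 \<le> \<phi> \<pi>"
    and q0: "0 \<le> q" and q1: "q \<le> 1" and L0: "0 \<le> L"
    and Gam: "\<And>I. I \<noteq> {} \<Longrightarrow> (\<Sum>\<pi>\<in>{\<pi>\<in>P. I \<subseteq> S \<pi>}. \<phi> \<pi> * q ^ card (S \<pi> - I)) \<le> L"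
    and Vb: "(\<Sum>I\<in>Pow U - {{}}. q ^ card I * (\<Sum>\<pi>\<in>{\<pi>\<in>P. I \<subseteq> S \<pi>}. \<phi> \<pi> * q ^ card (S \<pi> - I))^2) \<le> V"
begin

lemma finS: "\<pi> \<in> P \<Longrightarrow> finite (S \<pi>)"
  using SU finU finite_subset by blast

lemma A_lemma:
  assumes "finite W"
  shows "(\<Sum>\<pi>\<in>{\<pi>\<in>P. S \<pi> \<inter> W \<noteq> {}}. \<phi> \<pi> * q ^ card (S \<pi> - W)) \<le> 2 ^ card W * L"
proof -
  have "(\<Sum>\<pi>\<in>{\<pi>\<in>P. S \<pi> \<inter> W \<noteq> {}}. \<phi> \<pi> * q ^ card (S \<pi> - W))
      = (\<Sum>I\<in>Pow W - {{}}. \<Sum>\<pi>\<in>{\<pi>\<in>{\<pi>\<in>P. S \<pi> \<inter> W \<noteq> {}}. S \<pi> \<inter> W = I}. \<phi> \<pi> * q ^ card (S \<pi> - W))"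
    by (rule sum.group[symmetric]) (use finP assms in auto)
  also have "\<dots> \<le> (\<Sum>I\<in>Pow W - {{}}. L)"
  proof (rule sum_mono)
    fix I assume I: "I \<in> Pow W - {{}}"
    have "(\<Sum>\<pi>\<in>{\<pi>\<in>{\<pi>\<in>P. S \<pi> \<inter> W \<noteq> {}}. S \<pi> \<inter> W = I}. \<phi> \<pi> * q ^ card (S \<pi> - W))
        = (\<Sum>\<pi>\<in>{\<pi>\<in>{\<pi>\<in>P. S \<pi> \<inter> W \<noteq> {}}. S \<pi> \<inter> W = I}. \<phi> \<pi> * q ^ card (S \<pi> - I))"
    proof (rule sum.cong)
      fix \<pi> assume "\<pi> \<in> {\<pi>\<in>{\<pi>\<in>P. S \<pi> \<inter> W \<noteq> {}}. S \<pi> \<inter> W = I}"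
      hence "S \<pi> - W = S \<pi> - I" by auto
      thus "\<phi> \<pi> * q ^ card (S \<pi> - W) = \<phi> \<pi> * q ^ card (S \<pi> - I)" by simp
    qed simp
    also have "\<dots> \<le> (\<Sum>\<pi>\<in>{\<pi>\<in>P. I \<subseteq> S \<pi>}. \<phi> \<pi> * q ^ card (S \<pi> - I))"
      by (rule sum_mono2) (use finP \<phi>nn q0 in auto)
    also have "\<dots> \<le> L" using Gam I by auto
    finally show "(\<Sum>\<pi>\<in>{\<pi>\<in>{\<pi>\<in>P. S \<pi> \<inter> W \<noteq> {}}. S \<pi> \<inter> W = I}. \<phi> \<pi> * q ^ card (S \<pi> - W)) \<le> L" .
  qed
  also have "\<dots> = card (Pow W - {{}}) * L" by simp
  also have "\<dots> \<le> 2 ^ card W * L"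
  proof -
    have "card (Pow W - {{}}) \<le> card (Pow W)" by (rule card_mono) (use assms in auto)
    also have "\<dots> = 2 ^ card W" using assms by (simp add: card_Pow)
    finally show ?thesis using L0 by (intro mult_right_mono) (auto simp flip: of_nat_power)
  qed
  finally show ?thesis .
qed

lemma card_union_split:
  assumes "finite A" "finite B" "A \<inter> B = I"
  shows "card (A \<union> B) = card I + card (A - I) + card (B - I)"
proof -
  have "A \<union> B = I \<union> (A - I) \<union> (B - I)" using assms by auto
  moreover have "card (I \<union> (A - I) \<union> (B - I)) = card (I \<union> (A - I)) + card (B - I)"
    by (rule card_Un_disjoint) (use assms in auto)
  moreover have "card (I \<union> (A - I)) = card I + card (A - I)"
    by (rule card_Un_disjoint) (use assms in auto)
  ultimately show ?thesis by simp
qed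

lemma pair_lemma:
  "(\<Sum>a\<in>P. \<Sum>b\<in>{b\<in>P. S a \<inter> S b \<noteq> {}}. \<phi> a * \<phi> b * q ^ card (S a \<union> S b)) \<le> V"
proof -
  define g where "g x = \<phi> (fst x) * \<phi> (snd x) * q ^ card (S (fst x) \<union> S (snd x))" for x
  define Q where "Q = {x\<in>P \<times> P. S (fst x) \<inter> S (snd x) \<noteq> {}}"
  define \<Gamma> where "\<Gamma> I = (\<Sum>\<pi>\<in>{\<pi>\<in>P. I \<subseteq> S \<pi>}. \<phi> \<pi> * q ^ card (S \<pi> - I))" for I
  have finQ: "finite Q" unfolding Q_def using finP by auto
  have "(\<Sum>a\<in>P. \<Sum>b\<in>{b\<in>P. S a \<inter> S b \<noteq> {}}. \<phi> a * \<phi> b * q ^ card (S a \<union> S b))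
      = (\<Sum>a\<in>P. \<Sum>b\<in>P. if S a \<inter> S b \<noteq> {} then g (a, b) else 0)"
    unfolding g_def by (rule sum.cong[OF refl]) (simp add: sum.inter_filter finP cong: if_cong)
  also have "\<dots> = (\<Sum>x\<in>P \<times> P. if S (fst x) \<inter> S (snd x) \<noteq> {} then g x else 0)"
    unfolding sum.cartesian_product by (simp add: case_prod_unfold cong: if_cong)
  also have "\<dots> = sum g Q"
    unfolding Q_def by (simp add: sum.inter_filter finP)
  also have "\<dots> = (\<Sum>I\<in>Pow U - {{}}. \<Sum>x\<in>{x\<in>Q. S (fst x) \<inter> S (snd x) = I}. g x)"
    by (rule sum.group[symmetric]) (use finQ finU SU in \<open>fastforce simp: Q_def\<close>)+
  also have "\<dots> \<le> (\<Sum>I\<in>Pow U - {{}}. q ^ card I * \<Gamma> I ^ 2)"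
  proof (rule sum_mono)
    fix I assume I: "I \<in> Pow U - {{}}"
    define k where "k x = q ^ card I * ((\<phi> (fst x) * q ^ card (S (fst x) - I)) * (\<phi> (snd x) * q ^ card (S (snd x) - I)))" for x
    have "(\<Sum>x\<in>{x\<in>Q. S (fst x) \<inter> S (snd x) = I}. g x) = (\<Sum>x\<in>{x\<in>Q. S (fst x) \<inter> S (snd x) = I}. k x)"
    proof (rule sum.cong)
      fix x assume x: "x \<in> {x\<in>Q. S (fst x) \<inter> S (snd x) = I}"
      hence "card (S (fst x) \<union> S (snd x)) = card I + card (S (fst x) - I) + card (S (snd x) - I)"
        by (intro card_union_split) (auto simp: Q_def finS)
      thus "g x = k x" by (simp add: g_def k_def power_add)
    qed simp
    also have "\<dots> \<le> (\<Sum>x\<in>{\<pi>\<in>P. I \<subseteq> S \<pi>} \<times> {\<pi>\<in>P. I \<subseteq> S \<pi>}. k x)"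
      by (rule sum_mono2) (use finP \<phi>nn q0 in \<open>auto simp: Q_def k_def\<close>)
    also have "\<dots> = (\<Sum>a\<in>{\<pi>\<in>P. I \<subseteq> S \<pi>}. \<Sum>b\<in>{\<pi>\<in>P. I \<subseteq> S \<pi>}. q ^ card I * ((\<phi> a * q ^ card (S a - I)) * (\<phi> b * q ^ card (S b - I))))"
      unfolding sum.cartesian_product k_def by (simp add: case_prod_unfold)
    also have "\<dots> = q ^ card I * \<Gamma> I ^ 2"
      unfolding \<Gamma>_def by (rule sum_sq_aux)
    finally show "(\<Sum>x\<in>{x\<in>Q. S (fst x) \<inter> S (snd x) = I}. g x) \<le> q ^ card I * \<Gamma> I ^ 2" .
  qed
  also have "\<dots> \<le> V" using Vb unfolding \<Gamma>_def .
  finally show ?thesis .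
qed

lemma card_diff_split:
  assumes "finite A" "finite B"
  shows "card (A - W) + card (B - (W \<union> A)) = card ((A \<union> B) - W)"
proof -
  have "(A \<union> B) - W = (A - W) \<union> (B - (W \<union> A))" by auto
  moreover have "card ((A - W) \<union> (B - (W \<union> A))) = card (A - W) + card (B - (W \<union> A))"
    by (rule card_Un_disjoint) (use assms in auto)
  ultimately show ?thesis by simp
qed

lemma D_lemma:
  assumes "finite W"
  shows "(\<Sum>a\<in>P. of_bool (S a \<inter> W = {}) * (\<phi> a * q ^ card (S a - W) *
            (\<Sum>b\<in>P. of_bool (S b \<inter> S a \<noteq> {}) * (\<phi> b * q ^ card (S b - (W \<union> S a))))))
         \<le> V + 2 ^ card W * L * (2 ^ (card W + h) * L)"
proof -
  define f1 where "f1 a b = of_bool (S a \<inter> W = {}) * of_bool (S b \<inter> S a \<noteq> {}) * of_bool (S b \<inter> W = {}) *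
     (\<phi> a * q ^ card (S a - W) * (\<phi> b * q ^ card (S b - (W \<union> S a))))" for a b
  define f2 where "f2 a b = of_bool (S a \<inter> W = {}) * of_bool (S b \<inter> S a \<noteq> {}) * of_bool (S b \<inter> W \<noteq> {}) *
     (\<phi> a * q ^ card (S a - W) * (\<phi> b * q ^ card (S b - (W \<union> S a))))" for a b
  have split: "(\<Sum>a\<in>P. of_bool (S a \<inter> W = {}) * (\<phi> a * q ^ card (S a - W) *
            (\<Sum>b\<in>P. of_bool (S b \<inter> S a \<noteq> {}) * (\<phi> b * q ^ card (S b - (W \<union> S a))))))
      = (\<Sum>a\<in>P. \<Sum>b\<in>P. f1 a b) + (\<Sum>a\<in>P. \<Sum>b\<in>P. f2 a b)"
    unfolding sum.distrib[symmetric] sum_distrib_left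
    by (intro sum.cong refl) (auto simp: f1_def f2_def)
  have b1: "(\<Sum>a\<in>P. \<Sum>b\<in>P. f1 a b) \<le> V"
  proof -
    have "(\<Sum>a\<in>P. \<Sum>b\<in>P. f1 a b) \<le> (\<Sum>a\<in>P. \<Sum>b\<in>{b\<in>P. S a \<inter> S b \<noteq> {}}. \<phi> a * \<phi> b * q ^ card (S a \<union> S b))"
    proof (rule sum_mono)
      fix a assume a: "a \<in> P"
      have "(\<Sum>b\<in>P. f1 a b) \<le> (\<Sum>b\<in>P. of_bool (S a \<inter> S b \<noteq> {}) * (\<phi> a * \<phi> b * q ^ card (S a \<union> S b)))"
      proof (rule sum_mono)
        fix b assume b: "b \<in> P"
        show "f1 a b \<le> of_bool (S a \<inter> S b \<noteq> {}) * (\<phi> a * \<phi> b * q ^ card (S a \<union> S b))"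
        proof (cases "S a \<inter> W = {} \<and> S b \<inter> S a \<noteq> {} \<and> S b \<inter> W = {}")
          case True
          have "card (S a - W) + card (S b - (W \<union> S a)) = card ((S a \<union> S b) - W)"
            by (rule card_diff_split) (use a b finS in auto)
          moreover have "(S a \<union> S b) - W = S a \<union> S b" using True by auto
          ultimately have "q ^ card (S a - W) * q ^ card (S b - (W \<union> S a)) = q ^ card (S a \<union> S b)"
            by (simp flip: power_add)
          thus ?thesis using True unfolding f1_def by (auto simp: Int_commute mult_ac)
        next
          case False
          thus ?thesis unfolding f1_def using a b \<phi>nn q0 by auto
        qed
      qed
      also have "\<dots> = (\<Sum>b\<in>{b\<in>P. S a \<inter> S b \<noteq> {}}. \<phi> a * \<phi> b * q ^ card (S a \<union> S b))"
        by (subst sum.inter_filter[OF finP]) (auto intro!: sum.cong)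
      finally show "(\<Sum>b\<in>P. f1 a b) \<le> \<dots>" .
    qed
    also have "\<dots> \<le> V" by (rule pair_lemma)
    finally show ?thesis .
  qed
  have b2: "(\<Sum>a\<in>P. \<Sum>b\<in>P. f2 a b) \<le> 2 ^ card W * L * (2 ^ (card W + h) * L)"
  proof -
    have "(\<Sum>a\<in>P. \<Sum>b\<in>P. f2 a b) = (\<Sum>b\<in>P. \<Sum>a\<in>P. f2 a b)" by (rule sum.swap)
    also have "\<dots> \<le> (\<Sum>b\<in>P. of_bool (S b \<inter> W \<noteq> {}) * (\<phi> b * q ^ card (S b - W) *
          (\<Sum>a\<in>P. of_bool (S a \<inter> (W \<union> S b) \<noteq> {}) * (\<phi> a * q ^ card (S a - (W \<union> S b))))))"
    proof (rule sum_mono)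
      fix b assume b: "b \<in> P"
      have "(\<Sum>a\<in>P. f2 a b) \<le> (\<Sum>a\<in>P. of_bool (S b \<inter> W \<noteq> {}) * (\<phi> b * q ^ card (S b - W) *
          (of_bool (S a \<inter> (W \<union> S b) \<noteq> {}) * (\<phi> a * q ^ card (S a - (W \<union> S b))))))"
      proof (rule sum_mono)
        fix a assume a: "a \<in> P"
        show "f2 a b \<le> of_bool (S b \<inter> W \<noteq> {}) * (\<phi> b * q ^ card (S b - W) *
          (of_bool (S a \<inter> (W \<union> S b) \<noteq> {}) * (\<phi> a * q ^ card (S a - (W \<union> S b)))))"
        proof (cases "S a \<inter> W = {} \<and> S b \<inter> S a \<noteq> {} \<and> S b \<inter> W \<noteq> {}")
          case True
          have "card (S a - W) + card (S b - (W \<union> S a)) = card ((S a \<union> S b) - W)"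
            by (rule card_diff_split) (use a b finS in auto)
          moreover have "card (S b - W) + card (S a - (W \<union> S b)) = card ((S b \<union> S a) - W)"
            by (rule card_diff_split) (use a b finS in auto)
          ultimately have "q ^ card (S a - W) * q ^ card (S b - (W \<union> S a)) = q ^ card (S b - W) * q ^ card (S a - (W \<union> S b))"
            by (simp flip: power_add add: Un_commute)
          moreover have "S a \<inter> (W \<union> S b) \<noteq> {}" using True by auto
          ultimately show ?thesis using True unfolding f2_def by (simp add: mult_ac)
        next
          case False
          thus ?thesis unfolding f2_def using a b \<phi>nn q0 by auto
        qed
      qed
      also have "\<dots> = of_bool (S b \<inter> W \<noteq> {}) * (\<phi> b * q ^ card (S b - W) *
          (\<Sum>a\<in>P. of_bool (S a \<inter> (W \<union> S b) \<noteq> {}) * (\<phi> a * q ^ card (S a - (W \<union> S b)))))"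
        by (simp add: sum_distrib_left)
      finally show "(\<Sum>a\<in>P. f2 a b) \<le> \<dots>" .
    qed
    also have "\<dots> \<le> (\<Sum>b\<in>P. of_bool (S b \<inter> W \<noteq> {}) * (\<phi> b * q ^ card (S b - W) * (2 ^ (card W + h) * L)))"
    proof (rule sum_mono)
      fix b assume b: "b \<in> P"
      have "(\<Sum>a\<in>P. of_bool (S a \<inter> (W \<union> S b) \<noteq> {}) * (\<phi> a * q ^ card (S a - (W \<union> S b))))
          = (\<Sum>a\<in>{a\<in>P. S a \<inter> (W \<union> S b) \<noteq> {}}. \<phi> a * q ^ card (S a - (W \<union> S b)))"
        by (subst sum.inter_filter[OF finP]) (auto intro!: sum.cong)
      also have "\<dots> \<le> 2 ^ card (W \<union> S b) * L"
        by (rule A_lemma) (use assms b finS in auto)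
      also have "\<dots> \<le> 2 ^ (card W + h) * L"
      proof -
        have "card (W \<union> S b) \<le> card W + card (S b)" by (rule card_Un_le)
        also have "\<dots> \<le> card W + h" using Scard b by simp
        finally have "(2::real) ^ card (W \<union> S b) \<le> 2 ^ (card W + h)" by (intro power_increasing) auto
        thus ?thesis using L0 by (rule mult_right_mono)
      qed
      finally show "of_bool (S b \<inter> W \<noteq> {}) * (\<phi> b * q ^ card (S b - W) *
          (\<Sum>a\<in>P. of_bool (S a \<inter> (W \<union> S b) \<noteq> {}) * (\<phi> a * q ^ card (S a - (W \<union> S b)))))
          \<le> of_bool (S b \<inter> W \<noteq> {}) * (\<phi> b * q ^ card (S b - W) * (2 ^ (card W + h) * L))"
        using \<phi>nn[OF b] q0 by (intro mult_left_mono) auto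
    qed
    also have "\<dots> = (\<Sum>b\<in>{b\<in>P. S b \<inter> W \<noteq> {}}. \<phi> b * q ^ card (S b - W)) * (2 ^ (card W + h) * L)"
      by (subst sum.inter_filter[OF finP]) (auto simp: sum_distrib_right intro!: sum.cong)
    also have "\<dots> \<le> 2 ^ card W * L * (2 ^ (card W + h) * L)"
      by (rule mult_right_mono[OF A_lemma[OF assms]]) (use L0 in auto)
    finally show ?thesis .
  qed
  show ?thesis using split b1 b2 by linarith
qed

definition cnd :: "nat set \<Rightarrow> nat set \<Rightarrow> (nat \<Rightarrow> 'a) \<Rightarrow> bool" where
  "cnd J W \<sigma> \<longleftrightarrow> (\<forall>j\<in>J. S (\<sigma> j) \<inter> W \<noteq> {} \<or> (\<exists>i\<in>J. i \<noteq> j \<and> S (\<sigma> i) \<inter> S (\<sigma> j) \<noteq> {}))"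

definition UU :: "nat set \<Rightarrow> (nat \<Rightarrow> 'a) \<Rightarrow> nat set" where
  "UU J \<sigma> = (\<Union>j\<in>J. S (\<sigma> j))"

definition G :: "nat set \<Rightarrow> nat set \<Rightarrow> (nat \<Rightarrow> 'a) \<Rightarrow> real" where
  "G J W \<sigma> = of_bool (cnd J W \<sigma>) * (\<Prod>j\<in>J. \<phi> (\<sigma> j)) * q ^ card (UU J \<sigma> - W)"

definition Phi :: "nat set \<Rightarrow> nat set \<Rightarrow> real" where
  "Phi J W = (\<Sum>\<sigma>\<in>PiE J (\<lambda>_. P). G J W \<sigma>)"

lemma G_nn: "\<sigma> \<in> PiE J (\<lambda>_. P) \<Longrightarrow> 0 \<le> G J W \<sigma>"
proof -
  assume s: "\<sigma> \<in> PiE J (\<lambda>_. P)"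
  have "0 \<le> (\<Prod>j\<in>J. \<phi> (\<sigma> j))" using s \<phi>nn by (intro prod_nonneg) auto
  thus ?thesis unfolding G_def using q0 by simp
qed

lemma Phi_nn: "0 \<le> Phi J W"
  unfolding Phi_def by (intro sum_nonneg G_nn)

lemma finite_UU: "\<sigma> \<in> PiE J (\<lambda>_. P) \<Longrightarrow> finite J \<Longrightarrow> finite (UU J \<sigma>)"
  unfolding UU_def using finS by auto

lemma G_insert:
  assumes J: "finite J" "j \<notin> J" and \<tau>: "\<tau> \<in> PiE J (\<lambda>_. P)" and \<pi>: "\<pi> \<in> P"
  shows "G (insert j J) W (\<tau>(j:=\<pi>)) \<le> \<phi> \<pi> * q ^ card (S \<pi> - W) * G J (W \<union> S \<pi>) \<tau> *
     (of_bool (S \<pi> \<inter> W \<noteq> {}) + (\<Sum>i\<in>J. of_bool (S \<pi> \<inter> W = {} \<and> S (\<tau> i) \<inter> S \<pi> \<noteq> {})))"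
    and "G (insert j J) W (\<tau>(j:=\<pi>)) \<le> \<phi> \<pi> * q ^ card (S \<pi> - W) * G J (W \<union> S \<pi>) \<tau>"
proof -
  let ?\<sigma> = "\<tau>(j:=\<pi>)"
  have ev: "?\<sigma> i = \<tau> i" if "i \<in> J" for i using that J by auto
  have prod: "(\<Prod>i\<in>insert j J. \<phi> (?\<sigma> i)) = \<phi> \<pi> * (\<Prod>i\<in>J. \<phi> (\<tau> i))"
  proof -
    have "(\<Prod>i\<in>J. \<phi> (?\<sigma> i)) = (\<Prod>i\<in>J. \<phi> (\<tau> i))" using ev by (intro prod.cong) auto
    thus ?thesis using J by (simp add: prod.insert)
  qed
  have UUe: "UU (insert j J) ?\<sigma> - W = (S \<pi> - W) \<union> (UU J \<tau> - (W \<union> S \<pi>))"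
    unfolding UU_def using ev by auto
  have "card (UU (insert j J) ?\<sigma> - W) = card (S \<pi> - W) + card (UU J \<tau> - (W \<union> S \<pi>))"
    unfolding UUe by (rule card_Un_disjoint) (use finS[OF \<pi>] finite_UU[OF \<tau> J(1)] in auto)
  hence qe: "q ^ card (UU (insert j J) ?\<sigma> - W) = q ^ card (S \<pi> - W) * q ^ card (UU J \<tau> - (W \<union> S \<pi>))"
    by (simp add: power_add)
  have Gi: "G (insert j J) W ?\<sigma> = of_bool (cnd (insert j J) W ?\<sigma>) * (\<phi> \<pi> * q ^ card (S \<pi> - W)) *
      ((\<Prod>i\<in>J. \<phi> (\<tau> i)) * q ^ card (UU J \<tau> - (W \<union> S \<pi>)))"
    unfolding G_def prod qe by (simp add: mult_ac)
  have nn: "0 \<le> \<phi> \<pi> * q ^ card (S \<pi> - W)" using \<phi>nn[OF \<pi>] q0 by simp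
  have nnG: "0 \<le> G J (W \<union> S \<pi>) \<tau>" by (rule G_nn[OF \<tau>])
  have "G (insert j J) W ?\<sigma> \<le> \<phi> \<pi> * q ^ card (S \<pi> - W) * G J (W \<union> S \<pi>) \<tau> *
     (of_bool (S \<pi> \<inter> W \<noteq> {}) + (\<Sum>i\<in>J. of_bool (S \<pi> \<inter> W = {} \<and> S (\<tau> i) \<inter> S \<pi> \<noteq> {})))
     \<and> G (insert j J) W ?\<sigma> \<le> \<phi> \<pi> * q ^ card (S \<pi> - W) * G J (W \<union> S \<pi>) \<tau>"
  proof (cases "cnd (insert j J) W ?\<sigma>")
    case False
    have "0 \<le> \<phi> \<pi> * q ^ card (S \<pi> - W) * G J (W \<union> S \<pi>) \<tau> *
     (of_bool (S \<pi> \<inter> W \<noteq> {}) + (\<Sum>i\<in>J. of_bool (S \<pi> \<inter> W = {} \<and> S (\<tau> i) \<inter> S \<pi> \<noteq> {})))"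
      using nn nnG by (intro mult_nonneg_nonneg[OF mult_nonneg_nonneg[OF nn nnG]] add_nonneg_nonneg sum_nonneg) auto
    thus ?thesis using False Gi nn nnG by simp
  next
    case True
    have c1: "cnd J (W \<union> S \<pi>) \<tau>"
      unfolding cnd_def
    proof
      fix i assume i: "i \<in> J"
      from True i have "S (?\<sigma> i) \<inter> W \<noteq> {} \<or> (\<exists>k\<in>insert j J. k \<noteq> i \<and> S (?\<sigma> k) \<inter> S (?\<sigma> i) \<noteq> {})"
        unfolding cnd_def by blast
      thus "S (\<tau> i) \<inter> (W \<union> S \<pi>) \<noteq> {} \<or> (\<exists>k\<in>J. k \<noteq> i \<and> S (\<tau> k) \<inter> S (\<tau> i) \<noteq> {})"
        using i ev J(2) by (auto split: if_splits)
    qed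
    have c2: "S \<pi> \<inter> W \<noteq> {} \<or> (\<exists>i\<in>J. S (\<tau> i) \<inter> S \<pi> \<noteq> {})"
    proof -
      from True have "S (?\<sigma> j) \<inter> W \<noteq> {} \<or> (\<exists>k\<in>insert j J. k \<noteq> j \<and> S (?\<sigma> k) \<inter> S (?\<sigma> j) \<noteq> {})"
        unfolding cnd_def by blast
      thus ?thesis using ev by auto
    qed
    have GJ: "G J (W \<union> S \<pi>) \<tau> = (\<Prod>i\<in>J. \<phi> (\<tau> i)) * q ^ card (UU J \<tau> - (W \<union> S \<pi>))"
      unfolding G_def using c1 by simp
    have eq: "G (insert j J) W ?\<sigma> = \<phi> \<pi> * q ^ card (S \<pi> - W) * G J (W \<union> S \<pi>) \<tau>"
      using Gi GJ True by simp
    have fac: "1 \<le> of_bool (S \<pi> \<inter> W \<noteq> {}) + (\<Sum>i\<in>J. of_bool (S \<pi> \<inter> W = {} \<and> S (\<tau> i) \<inter> S \<pi> \<noteq> {}) :: real)"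
    proof (cases "S \<pi> \<inter> W \<noteq> {}")
      case True thus ?thesis by (simp add: sum_nonneg)
    next
      case False
      then obtain i where i: "i \<in> J" "S (\<tau> i) \<inter> S \<pi> \<noteq> {}" using c2 by auto
      have "(1::real) = of_bool (S \<pi> \<inter> W = {} \<and> S (\<tau> i) \<inter> S \<pi> \<noteq> {})" using False i by simp
      also have "\<dots> \<le> (\<Sum>i\<in>J. of_bool (S \<pi> \<inter> W = {} \<and> S (\<tau> i) \<inter> S \<pi> \<noteq> {}))"
        by (rule member_le_sum) (use i J in auto)
      finally show ?thesis using False by simp
    qed
    have "\<phi> \<pi> * q ^ card (S \<pi> - W) * G J (W \<union> S \<pi>) \<tau> * 1 \<le> \<phi> \<pi> * q ^ card (S \<pi> - W) * G J (W \<union> S \<pi>) \<tau> *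
     (of_bool (S \<pi> \<inter> W \<noteq> {}) + (\<Sum>i\<in>J. of_bool (S \<pi> \<inter> W = {} \<and> S (\<tau> i) \<inter> S \<pi> \<noteq> {})))"
      by (rule mult_left_mono[OF fac]) (use nn nnG in auto)
    thus ?thesis using eq by simp
  qed
  thus "G (insert j J) W (\<tau>(j:=\<pi>)) \<le> \<phi> \<pi> * q ^ card (S \<pi> - W) * G J (W \<union> S \<pi>) \<tau> *
     (of_bool (S \<pi> \<inter> W \<noteq> {}) + (\<Sum>i\<in>J. of_bool (S \<pi> \<inter> W = {} \<and> S (\<tau> i) \<inter> S \<pi> \<noteq> {})))"
    and "G (insert j J) W (\<tau>(j:=\<pi>)) \<le> \<phi> \<pi> * q ^ card (S \<pi> - W) * G J (W \<union> S \<pi>) \<tau>" by auto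
qed

lemma Phi_empty: "Phi {} W = 1"
  unfolding Phi_def G_def cnd_def UU_def by simp

lemma part2:
  assumes J': "finite J'" "i \<in> J'" and W: "finite W" "card W \<le> w"
    and lam: "0 \<le> lam" "L \<le> lam" "V \<le> lam^2"
    and IH: "\<And>W'. finite W' \<Longrightarrow> card W' \<le> w + 2*h \<Longrightarrow> Phi (J' - {i}) W' \<le> K"
    and K0: "0 \<le> K"
  shows "(\<Sum>\<pi>\<in>P. of_bool (S \<pi> \<inter> W = {}) * (\<phi> \<pi> * q ^ card (S \<pi> - W) *
            (\<Sum>\<tau>\<in>PiE J' (\<lambda>_. P). of_bool (S (\<tau> i) \<inter> S \<pi> \<noteq> {}) * G J' (W \<union> S \<pi>) \<tau>)))
         \<le> (1 + 2^(2*w+h)) * lam^2 * K"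
proof -
  define J'' where "J'' = J' - {i}"
  have JJ: "J' = insert i J''" "i \<notin> J''" "finite J''" using J' by (auto simp: J''_def)
  define D where "D \<pi> = (\<Sum>\<pi>1\<in>P. of_bool (S \<pi>1 \<inter> S \<pi> \<noteq> {}) * (\<phi> \<pi>1 * q ^ card (S \<pi>1 - (W \<union> S \<pi>))))" for \<pi>
  have inner: "(\<Sum>\<tau>\<in>PiE J' (\<lambda>_. P). of_bool (S (\<tau> i) \<inter> S \<pi> \<noteq> {}) * G J' (W \<union> S \<pi>) \<tau>) \<le> D \<pi> * K"
    if \<pi>: "\<pi> \<in> P" for \<pi>
  proof -
    have "(\<Sum>\<tau>\<in>PiE J' (\<lambda>_. P). of_bool (S (\<tau> i) \<inter> S \<pi> \<noteq> {}) * G J' (W \<union> S \<pi>) \<tau>)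
        = (\<Sum>\<pi>1\<in>P. \<Sum>\<rho>\<in>PiE J'' (\<lambda>_. P). of_bool (S \<pi>1 \<inter> S \<pi> \<noteq> {}) * G (insert i J'') (W \<union> S \<pi>) (\<rho>(i:=\<pi>1)))"
      unfolding JJ(1) by (subst sum_PiE_insert[OF JJ(3,2)]) simp
    also have "\<dots> \<le> (\<Sum>\<pi>1\<in>P. \<Sum>\<rho>\<in>PiE J'' (\<lambda>_. P). of_bool (S \<pi>1 \<inter> S \<pi> \<noteq> {}) *
          (\<phi> \<pi>1 * q ^ card (S \<pi>1 - (W \<union> S \<pi>)) * G J'' (W \<union> S \<pi> \<union> S \<pi>1) \<rho>))"
      by (intro sum_mono mult_left_mono G_insert(2)[OF JJ(3,2)]) auto
    also have "\<dots> = (\<Sum>\<pi>1\<in>P. of_bool (S \<pi>1 \<inter> S \<pi> \<noteq> {}) *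
          (\<phi> \<pi>1 * q ^ card (S \<pi>1 - (W \<union> S \<pi>)) * Phi J'' (W \<union> S \<pi> \<union> S \<pi>1)))"
      unfolding Phi_def by (simp add: sum_distrib_left)
    also have "\<dots> \<le> (\<Sum>\<pi>1\<in>P. of_bool (S \<pi>1 \<inter> S \<pi> \<noteq> {}) *
          (\<phi> \<pi>1 * q ^ card (S \<pi>1 - (W \<union> S \<pi>)) * K))"
    proof (rule sum_mono)
      fix \<pi>1 assume \<pi>1: "\<pi>1 \<in> P"
      have "card (W \<union> S \<pi> \<union> S \<pi>1) \<le> card W + card (S \<pi>) + card (S \<pi>1)"
        by (meson add_le_mono card_Un_le le_trans order_refl)
      also have "\<dots> \<le> w + 2 * h" using W Scard[OF \<pi>] Scard[OF \<pi>1] by simp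
      finally have "Phi J'' (W \<union> S \<pi> \<union> S \<pi>1) \<le> K"
        unfolding J''_def using IH W finS \<pi> \<pi>1 by auto
      moreover have "0 \<le> \<phi> \<pi>1 * q ^ card (S \<pi>1 - (W \<union> S \<pi>))" using \<phi>nn[OF \<pi>1] q0 by simp
      ultimately show "of_bool (S \<pi>1 \<inter> S \<pi> \<noteq> {}) * (\<phi> \<pi>1 * q ^ card (S \<pi>1 - (W \<union> S \<pi>)) * Phi J'' (W \<union> S \<pi> \<union> S \<pi>1))
          \<le> of_bool (S \<pi>1 \<inter> S \<pi> \<noteq> {}) * (\<phi> \<pi>1 * q ^ card (S \<pi>1 - (W \<union> S \<pi>)) * K)"
        by (intro mult_left_mono) auto
    qed
    also have "\<dots> = D \<pi> * K" unfolding D_def by (simp add: sum_distrib_right sum_distrib_left mult_ac)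
    finally show ?thesis .
  qed
  have "(\<Sum>\<pi>\<in>P. of_bool (S \<pi> \<inter> W = {}) * (\<phi> \<pi> * q ^ card (S \<pi> - W) *
            (\<Sum>\<tau>\<in>PiE J' (\<lambda>_. P). of_bool (S (\<tau> i) \<inter> S \<pi> \<noteq> {}) * G J' (W \<union> S \<pi>) \<tau>)))
      \<le> (\<Sum>\<pi>\<in>P. of_bool (S \<pi> \<inter> W = {}) * (\<phi> \<pi> * q ^ card (S \<pi> - W) * (D \<pi> * K)))"
  proof (rule sum_mono)
    fix \<pi> assume \<pi>: "\<pi> \<in> P"
    have "0 \<le> \<phi> \<pi> * q ^ card (S \<pi> - W)" using \<phi>nn[OF \<pi>] q0 by simp
    thus "of_bool (S \<pi> \<inter> W = {}) * (\<phi> \<pi> * q ^ card (S \<pi> - W) *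
            (\<Sum>\<tau>\<in>PiE J' (\<lambda>_. P). of_bool (S (\<tau> i) \<inter> S \<pi> \<noteq> {}) * G J' (W \<union> S \<pi>) \<tau>))
        \<le> of_bool (S \<pi> \<inter> W = {}) * (\<phi> \<pi> * q ^ card (S \<pi> - W) * (D \<pi> * K))"
      using inner[OF \<pi>] by (intro mult_left_mono) auto
  qed
  also have "\<dots> = (\<Sum>\<pi>\<in>P. of_bool (S \<pi> \<inter> W = {}) * (\<phi> \<pi> * q ^ card (S \<pi> - W) * D \<pi>)) * K"
    by (simp add: sum_distrib_right sum_distrib_left mult_ac)
  also have "\<dots> \<le> (V + 2 ^ card W * L * (2 ^ (card W + h) * L)) * K"
    using D_lemma[OF W(1)] K0 unfolding D_def by (intro mult_right_mono) auto
  also have "\<dots> \<le> (1 + 2^(2*w+h)) * lam^2 * K"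
  proof (rule mult_right_mono[OF _ K0])
    have "(2::real) ^ card W \<le> 2 ^ w" using W by (intro power_increasing) auto
    have a: "2 ^ card W * L * (2 ^ (card W + h) * L) \<le> 2 ^ w * lam * (2 ^ (w + h) * lam)"
      using W lam L0 by (intro mult_mono power_increasing) auto
    have "2 ^ w * lam * (2 ^ (w + h) * lam) = (2::real)^(2*w+h) * lam^2"
      by (simp add: power_add power2_eq_square mult_2)
    thus "V + 2 ^ card W * L * (2 ^ (card W + h) * L) \<le> (1 + 2 ^ (2 * w + h)) * lam\<^sup>2"
      using a lam(3) by (simp add: distrib_right)
  qed
  finally show ?thesis .
qed

lemma Phi_bound:
  assumes lam: "0 \<le> lam" "L \<le> lam" "V \<le> lam^2"
  shows "finite J \<Longrightarrow> finite W \<Longrightarrow> card W \<le> w \<Longrightarrow> Phi J W \<le> Cb h (card J) w * lam ^ card J"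
proof (induction "card J" arbitrary: J W w rule: less_induct)
  case less
  show ?case
  proof (cases "J = {}")
    case True thus ?thesis by (simp add: Phi_empty)
  next
    case False
    then obtain j where j: "j \<in> J" by auto
    define J' where "J' = J - {j}"
    have JJ: "J = insert j J'" "j \<notin> J'" "finite J'" using j less.prems by (auto simp: J'_def)
    define n where "n = card J'"
    have cardJ: "card J = Suc n" unfolding n_def JJ(1) using JJ by simp
    have IH1: "Phi J' W' \<le> Cb h n (w+h) * lam^n" if "finite W'" "card W' \<le> w + h" for W'
      using less.hyps[of J' W' "w+h"] that JJ cardJ n_def by simp
    define f where "f \<pi> = \<phi> \<pi> * q ^ card (S \<pi> - W)" for \<pi>
    have f0: "0 \<le> f \<pi>" if "\<pi> \<in> P" for \<pi> unfolding f_def using \<phi>nn[OF that] q0 by simp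
    have "Phi J W = (\<Sum>\<pi>\<in>P. \<Sum>\<tau>\<in>PiE J' (\<lambda>_. P). G (insert j J') W (\<tau>(j:=\<pi>)))"
      unfolding Phi_def JJ(1) by (rule sum_PiE_insert[OF JJ(3,2)])
    also have "\<dots> \<le> (\<Sum>\<pi>\<in>P. \<Sum>\<tau>\<in>PiE J' (\<lambda>_. P). f \<pi> * G J' (W \<union> S \<pi>) \<tau> *
       (of_bool (S \<pi> \<inter> W \<noteq> {}) + (\<Sum>i\<in>J'. of_bool (S \<pi> \<inter> W = {} \<and> S (\<tau> i) \<inter> S \<pi> \<noteq> {}))))"
    proof (rule sum_mono, rule sum_mono)
      fix \<pi> \<tau> assume \<pi>: "\<pi> \<in> P" and \<tau>: "\<tau> \<in> PiE J' (\<lambda>_. P)"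
      show "G (insert j J') W (\<tau>(j:=\<pi>)) \<le> f \<pi> * G J' (W \<union> S \<pi>) \<tau> *
       (of_bool (S \<pi> \<inter> W \<noteq> {}) + (\<Sum>i\<in>J'. of_bool (S \<pi> \<inter> W = {} \<and> S (\<tau> i) \<inter> S \<pi> \<noteq> {})))"
        unfolding f_def by (rule G_insert(1)[OF JJ(3,2) \<tau> \<pi>])
    qed
    also have "\<dots> = (\<Sum>\<pi>\<in>P. of_bool (S \<pi> \<inter> W \<noteq> {}) * (f \<pi> * Phi J' (W \<union> S \<pi>)))
       + (\<Sum>i\<in>J'. \<Sum>\<pi>\<in>P. of_bool (S \<pi> \<inter> W = {}) * (f \<pi> *
            (\<Sum>\<tau>\<in>PiE J' (\<lambda>_. P). of_bool (S (\<tau> i) \<inter> S \<pi> \<noteq> {}) * G J' (W \<union> S \<pi>) \<tau>)))"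
    proof -
      have "(\<Sum>\<tau>\<in>PiE J' (\<lambda>_. P). f \<pi> * G J' (W \<union> S \<pi>) \<tau> *
       (of_bool (S \<pi> \<inter> W \<noteq> {}) + (\<Sum>i\<in>J'. of_bool (S \<pi> \<inter> W = {} \<and> S (\<tau> i) \<inter> S \<pi> \<noteq> {}))))
         = of_bool (S \<pi> \<inter> W \<noteq> {}) * (f \<pi> * Phi J' (W \<union> S \<pi>))
         + (\<Sum>i\<in>J'. of_bool (S \<pi> \<inter> W = {}) * (f \<pi> *
            (\<Sum>\<tau>\<in>PiE J' (\<lambda>_. P). of_bool (S (\<tau> i) \<inter> S \<pi> \<noteq> {}) * G J' (W \<union> S \<pi>) \<tau>)))" for \<pi>
        unfolding Phi_def alg1 by (simp add: alg2)
      thus ?thesis by (simp add: sum.distrib sum.swap[of _ J'])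
    qed
    also have "\<dots> \<le> 2^w * Cb h n (w+h) * lam^(Suc n) + (\<Sum>i\<in>J'. (1 + 2^(2*w+h)) * Cb h (n - 1) (w + 2*h) * lam^(Suc n))"
    proof (rule add_mono)
      have "(\<Sum>\<pi>\<in>P. of_bool (S \<pi> \<inter> W \<noteq> {}) * (f \<pi> * Phi J' (W \<union> S \<pi>)))
          \<le> (\<Sum>\<pi>\<in>P. of_bool (S \<pi> \<inter> W \<noteq> {}) * (f \<pi> * (Cb h n (w+h) * lam^n)))"
      proof (rule sum_mono)
        fix \<pi> assume \<pi>: "\<pi> \<in> P"
        have "card (W \<union> S \<pi>) \<le> w + h"
          using card_Un_le[of W "S \<pi>"] Scard[OF \<pi>] less.prems by linarith
        hence "Phi J' (W \<union> S \<pi>) \<le> Cb h n (w+h) * lam^n" using IH1 less.prems finS[OF \<pi>] by auto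
        thus "of_bool (S \<pi> \<inter> W \<noteq> {}) * (f \<pi> * Phi J' (W \<union> S \<pi>))
          \<le> of_bool (S \<pi> \<inter> W \<noteq> {}) * (f \<pi> * (Cb h n (w+h) * lam^n))"
          using f0[OF \<pi>] by (intro mult_left_mono) auto
      qed
      also have "\<dots> = (\<Sum>\<pi>\<in>{\<pi>\<in>P. S \<pi> \<inter> W \<noteq> {}}. f \<pi>) * (Cb h n (w+h) * lam^n)"
        by (rule sum_filter_mult[OF finP])
      also have "\<dots> \<le> (2 ^ card W * L) * (Cb h n (w+h) * lam^n)"
        unfolding f_def by (rule mult_right_mono[OF A_lemma]) (use less.prems Cb_nonneg lam in auto)
      also have "\<dots> \<le> (2 ^ w * lam) * (Cb h n (w+h) * lam^n)"
      proof -
        have "(2::real) ^ card W \<le> 2 ^ w" using less.prems by (intro power_increasing) auto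
        hence "2 ^ card W * L \<le> 2 ^ w * lam" using lam L0 by (intro mult_mono) auto
        thus ?thesis using Cb_nonneg lam by (intro mult_right_mono) auto
      qed
      also have "\<dots> = 2^w * Cb h n (w+h) * lam^(Suc n)" by (simp add: mult_ac)
      finally show "(\<Sum>\<pi>\<in>P. of_bool (S \<pi> \<inter> W \<noteq> {}) * (f \<pi> * Phi J' (W \<union> S \<pi>))) \<le> 2^w * Cb h n (w+h) * lam^(Suc n)" .
    next
      show "(\<Sum>i\<in>J'. \<Sum>\<pi>\<in>P. of_bool (S \<pi> \<inter> W = {}) * (f \<pi> *
            (\<Sum>\<tau>\<in>PiE J' (\<lambda>_. P). of_bool (S (\<tau> i) \<inter> S \<pi> \<noteq> {}) * G J' (W \<union> S \<pi>) \<tau>)))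
          \<le> (\<Sum>i\<in>J'. (1 + 2^(2*w+h)) * Cb h (n - 1) (w + 2*h) * lam^(Suc n))"
      proof (rule sum_mono)
        fix i assume i: "i \<in> J'"
        have n1: "card (J' - {i}) = n - 1" "n \<ge> 1" using i JJ(3) n_def by (auto simp: card_gt_0_iff Suc_le_eq)
        have IH2: "Phi (J' - {i}) W' \<le> Cb h (n - 1) (w + 2*h) * lam^(n - 1)" if "finite W'" "card W' \<le> w + 2*h" for W'
          using less.hyps[of "J' - {i}" W' "w + 2*h"] that JJ cardJ n1 by simp
        have K0: "0 \<le> Cb h (n - 1) (w + 2*h) * lam^(n - 1)" using Cb_nonneg lam by simp
        have "(\<Sum>\<pi>\<in>P. of_bool (S \<pi> \<inter> W = {}) * (f \<pi> *
            (\<Sum>\<tau>\<in>PiE J' (\<lambda>_. P). of_bool (S (\<tau> i) \<inter> S \<pi> \<noteq> {}) * G J' (W \<union> S \<pi>) \<tau>)))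
          \<le> (1 + 2^(2*w+h)) * lam^2 * (Cb h (n - 1) (w + 2*h) * lam^(n - 1))"
          unfolding f_def
          by (rule part2[OF JJ(3) i less.prems(2,3) lam IH2 K0])
        also have "\<dots> = (1 + 2^(2*w+h)) * Cb h (n - 1) (w + 2*h) * lam^(Suc n)"
        proof -
          have "lam^2 * lam^(n-1) = lam^(Suc n)" using n1(2)
          proof -
            have e: "2 + (n - 1) = Suc n" using n1(2) by simp
            show ?thesis by (simp only: power_add[symmetric] e)
          qed
          thus ?thesis by (simp add: mult_ac)
        qed
        finally show "(\<Sum>\<pi>\<in>P. of_bool (S \<pi> \<inter> W = {}) * (f \<pi> *
            (\<Sum>\<tau>\<in>PiE J' (\<lambda>_. P). of_bool (S (\<tau> i) \<inter> S \<pi> \<noteq> {}) * G J' (W \<union> S \<pi>) \<tau>)))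
          \<le> (1 + 2^(2*w+h)) * Cb h (n - 1) (w + 2*h) * lam^(Suc n)" .
      qed
    qed
    also have "\<dots> = Cb h (card J) w * lam ^ card J"
      unfolding cardJ Cb.simps sum_constant n_def[symmetric] by (simp add: distrib_right distrib_left mult_ac)
    finally show ?thesis .
  qed
qed

end


lemma exp_prod_Pi_bool:
  fixes f :: "nat \<Rightarrow> bool \<Rightarrow> real"
  assumes A: "finite A"
  shows "measure_pmf.expectation (Pi_pmf A False Q) (\<lambda>y. \<Prod>x\<in>A. f x (y x))
         = (\<Prod>x\<in>A. measure_pmf.expectation (Q x) (f x))"
proof -
  have fin: "finite (PiE_dflt A False (\<lambda>_. UNIV :: bool set))" using A by (intro finite_PiE_dflt) auto
  have "measure_pmf.expectation (Pi_pmf A False Q) (\<lambda>y. \<Prod>x\<in>A. f x (y x))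
      = (\<Sum>y\<in>PiE_dflt A False (\<lambda>_. UNIV). (\<Prod>x\<in>A. f x (y x)) * pmf (Pi_pmf A False Q) y)"
  proof (rule integral_measure_pmf_real[OF fin])
    fix y assume "y \<in> set_pmf (Pi_pmf A False Q)"
    hence "y \<in> PiE_dflt A False (set_pmf \<circ> Q)" by (rule subsetD[OF set_Pi_pmf_subset'[OF A]])
    thus "y \<in> PiE_dflt A False (\<lambda>_. UNIV)" by (auto simp: PiE_dflt_def)
  qed
  also have "\<dots> = (\<Sum>y\<in>PiE_dflt A False (\<lambda>_. UNIV). \<Prod>x\<in>A. f x (y x) * pmf (Q x) (y x))"
  proof (rule sum.cong[OF refl])
    fix y assume "y \<in> PiE_dflt A False (\<lambda>_. UNIV :: bool set)"
    hence "pmf (Pi_pmf A False Q) y = (\<Prod>x\<in>A. pmf (Q x) (y x))"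
      using A by (intro pmf_Pi') (auto simp: PiE_dflt_def)
    thus "(\<Prod>x\<in>A. f x (y x)) * pmf (Pi_pmf A False Q) y = (\<Prod>x\<in>A. f x (y x) * pmf (Q x) (y x))"
      by (simp add: prod.distrib)
  qed
  also have "\<dots> = (\<Sum>g\<in>PiE A (\<lambda>_. UNIV). \<Prod>x\<in>A. f x (g x) * pmf (Q x) (g x))"
  proof -
    have inj: "inj_on (\<lambda>h x. if x \<in> A then h x else False) (PiE A (\<lambda>_. UNIV :: bool set))"
    proof (rule inj_onI)
      fix g g' assume g: "g \<in> PiE A (\<lambda>_. UNIV :: bool set)" and g': "g' \<in> PiE A (\<lambda>_. UNIV)"
        and eq: "(\<lambda>x. if x \<in> A then g x else False) = (\<lambda>x. if x \<in> A then g' x else False)"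
      show "g = g'"
      proof
        fix x show "g x = g' x"
          using fun_cong[OF eq, of x] g g' by (cases "x \<in> A") (auto simp: PiE_def extensional_def)
      qed
    qed
    have "(\<Sum>y\<in>PiE_dflt A False (\<lambda>_. UNIV). \<Prod>x\<in>A. f x (y x) * pmf (Q x) (y x))
        = (\<Sum>g\<in>PiE A (\<lambda>_. UNIV). \<Prod>x\<in>A. f x (if x \<in> A then g x else False) * pmf (Q x) (if x \<in> A then g x else False))"
      unfolding dflt_image_PiE[symmetric] by (subst sum.reindex[OF inj]) (simp add: comp_def)
    also have "\<dots> = (\<Sum>g\<in>PiE A (\<lambda>_. UNIV). \<Prod>x\<in>A. f x (g x) * pmf (Q x) (g x))"
      by (intro sum.cong refl prod.cong) auto
    finally show ?thesis .
  qed
  also have "\<dots> = (\<Prod>x\<in>A. \<Sum>b\<in>UNIV. f x b * pmf (Q x) b)"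
    by (rule prod_sum_PiE[symmetric]) (use A in auto)
  also have "\<dots> = (\<Prod>x\<in>A. measure_pmf.expectation (Q x) (f x))"
    by (intro prod.cong refl integral_measure_pmf_real[symmetric]) auto
  finally show ?thesis .
qed

lemma exp_bern:
  assumes "0 \<le> p" "p \<le> 1"
  shows "measure_pmf.expectation (bernoulli_pmf p) g = p * g True + (1 - p) * g False"
proof -
  have "measure_pmf.expectation (bernoulli_pmf p) g = (\<Sum>b\<in>UNIV. g b * pmf (bernoulli_pmf p) b)"
    by (rule integral_measure_pmf_real) auto
  also have "\<dots> = p * g True + (1 - p) * g False"
    using assms by (simp add: UNIV_bool)
  finally show ?thesis .
qed

lemma vp_finite: "finite (set_pmf (vertex_pmf N p))"
proof -
  have "set_pmf (vertex_pmf N p) \<subseteq> PiE_dflt {1..N} False (\<lambda>_. UNIV)"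
    unfolding vertex_pmf_def using set_Pi_pmf_subset'[of "{1..N}" False "\<lambda>_. bernoulli_pmf p"]
    by (auto simp: PiE_dflt_def)
  moreover have "finite (PiE_dflt {1..N} False (\<lambda>_. UNIV :: bool set))" by (intro finite_PiE_dflt) auto
  ultimately show ?thesis by (rule finite_subset)
qed

lemma vp_integrable: "integrable (measure_pmf (vertex_pmf N p)) (f :: _ \<Rightarrow> real)"
  by (rule integrable_measure_pmf_finite[OF vp_finite])

lemma exp_vp_prod:
  fixes g :: "nat \<Rightarrow> bool \<Rightarrow> real"
  assumes W: "W \<subseteq> {1..N}" and p: "0 \<le> p" "p \<le> 1"
  shows "measure_pmf.expectation (vertex_pmf N p) (\<lambda>x. \<Prod>v\<in>W. g v (x v))
       = (\<Prod>v\<in>W. p * g v True + (1 - p) * g v False)"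
proof -
  define f where "f v = (if v \<in> W then g v else (\<lambda>_. 1))" for v
  have "(\<lambda>x. \<Prod>v\<in>W. g v (x v)) = (\<lambda>x. \<Prod>v\<in>{1..N}. f v (x v))"
  proof
    fix x
    have "(\<Prod>v\<in>{1..N}. f v (x v)) = (\<Prod>v\<in>W. f v (x v))"
      by (rule prod.mono_neutral_right) (use W in \<open>auto simp: f_def\<close>)
    thus "(\<Prod>v\<in>W. g v (x v)) = (\<Prod>v\<in>{1..N}. f v (x v))" by (simp add: f_def)
  qed
  hence "measure_pmf.expectation (vertex_pmf N p) (\<lambda>x. \<Prod>v\<in>W. g v (x v))
      = (\<Prod>v\<in>{1..N}. measure_pmf.expectation (bernoulli_pmf p) (f v))"
    unfolding vertex_pmf_def by (simp add: exp_prod_Pi_bool)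
  also have "\<dots> = (\<Prod>v\<in>{1..N}. p * f v True + (1 - p) * f v False)"
    using p by (simp add: exp_bern mult_ac)
  also have "\<dots> = (\<Prod>v\<in>W. p * f v True + (1 - p) * f v False)"
    by (rule prod.mono_neutral_right) (use W in \<open>auto simp: f_def\<close>)
  also have "\<dots> = (\<Prod>v\<in>W. p * g v True + (1 - p) * g v False)"
    by (rule prod.cong) (auto simp: f_def)
  finally show ?thesis .
qed


lemma prod_prod_count:
  assumes "finite J" "finite U" "\<forall>i\<in>J. B i \<subseteq> U"
  shows "(\<Prod>i\<in>J. \<Prod>v\<in>B i. g v) = (\<Prod>v\<in>U. (g v :: real) ^ card {i\<in>J. v \<in> B i})"
  using assms
proof (induction J rule: finite_induct)
  case empty thus ?case by simp
next
  case (insert j J)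
  have c: "card {i\<in>insert j J. v \<in> B i} = card {i\<in>J. v \<in> B i} + (if v \<in> B j then 1 else 0)" for v
  proof -
    have "{i\<in>insert j J. v \<in> B i} = (if v \<in> B j then insert j {i\<in>J. v \<in> B i} else {i\<in>J. v \<in> B i})"
      by auto
    thus ?thesis using insert.hyps by auto
  qed
  have "(\<Prod>v\<in>U. g v ^ (if v \<in> B j then 1 else 0)) = (\<Prod>v\<in>B j. g v)"
  proof -
    have "(\<Prod>v\<in>U. g v ^ (if v \<in> B j then 1 else 0)) = (\<Prod>v\<in>B j. g v ^ (if v \<in> B j then 1 else 0))"
      by (rule prod.mono_neutral_right) (use insert.prems in auto)
    thus ?thesis by simp
  qed
  have "(\<Prod>v\<in>U. g v ^ card {i\<in>insert j J. v \<in> B i}) = (\<Prod>v\<in>U. g v ^ card {i\<in>J. v \<in> B i} * g v ^ (if v \<in> B j then 1 else 0))"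
    by (intro prod.cong refl) (simp only: c power_add)
  also have "\<dots> = (\<Prod>v\<in>U. g v ^ card {i\<in>J. v \<in> B i}) * (\<Prod>v\<in>U. g v ^ (if v \<in> B j then 1 else 0))"
    by (rule prod.distrib)
  finally have "(\<Prod>v\<in>U. g v ^ card {i\<in>insert j J. v \<in> B i}) = (\<Prod>v\<in>B j. g v) * (\<Prod>v\<in>U. g v ^ card {i\<in>J. v \<in> B i})"
    using \<open>(\<Prod>v\<in>U. g v ^ (if v \<in> B j then 1 else 0)) = (\<Prod>v\<in>B j. g v)\<close> by simp
  thus ?case using insert by simp
qed

locale setting =
  fixes h N :: nat and p :: real
  assumes p0: "0 < p" and p1: "p < 1"
begin

definition q :: real where "q = p * (1 - p)"
definition xi :: "(nat \<Rightarrow> bool) \<Rightarrow> nat \<Rightarrow> real" where "xi x v = of_bool (x v) - p"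
definition xiB :: "(nat \<Rightarrow> bool) \<Rightarrow> nat set \<Rightarrow> real" where "xiB x B = (\<Prod>v\<in>B. xi x v)"
definition mu :: "nat \<Rightarrow> real" where "mu m = p * (1 - p) ^ m + (1 - p) * (- p) ^ m"

lemma q0: "0 \<le> q" and q1: "q \<le> 1"
  using p0 p1 unfolding q_def by (auto intro: mult_nonneg_nonneg) (smt (verit) mult_left_le_one_le)

lemma mu0: "mu 0 = 1" and mu1: "mu (Suc 0) = 0" and mu2: "mu 2 = q"
  unfolding mu_def q_def by (simp_all add: algebra_simps power2_eq_square)

lemma mu_bound: assumes "2 \<le> m" shows "\<bar>mu m\<bar> \<le> q"
proof -
  have a: "(1 - p) ^ m \<le> (1 - p) ^ 2" using assms p0 p1 by (intro power_decreasing) auto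
  have b: "p ^ m \<le> p ^ 2" using assms p0 p1 by (intro power_decreasing) auto
  have "\<bar>mu m\<bar> \<le> \<bar>p * (1 - p) ^ m\<bar> + \<bar>(1 - p) * (- p) ^ m\<bar>" unfolding mu_def by (rule abs_triangle_ineq)
  also have "\<dots> = p * (1 - p) ^ m + (1 - p) * p ^ m" using p0 p1 by (simp add: abs_mult power_abs)
  also have "\<dots> \<le> p * (1 - p) ^ 2 + (1 - p) * p ^ 2"
    using a b p0 p1 by (intro add_mono mult_left_mono) auto
  also have "\<dots> = q" unfolding q_def by (simp add: algebra_simps power2_eq_square)
  finally show ?thesis .
qed

abbreviation Pm where "Pm \<equiv> vertex_pmf N p"

lemma E_xi_prod:
  assumes J: "finite J" and B: "\<forall>i\<in>J. B i \<subseteq> {1..N}"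
  shows "measure_pmf.expectation Pm (\<lambda>x. \<Prod>i\<in>J. xiB x (B i)) = (\<Prod>v\<in>{1..N}. mu (card {i\<in>J. v \<in> B i}))"
proof -
  have "(\<lambda>x. \<Prod>i\<in>J. xiB x (B i)) = (\<lambda>x. \<Prod>v\<in>{1..N}. (\<lambda>b. (of_bool b - p) ^ card {i\<in>J. v \<in> B i}) (x v))"
    unfolding xiB_def xi_def by (intro ext prod_prod_count J B) auto
  thus ?thesis using exp_vp_prod[of "{1..N}" N p "\<lambda>v b. (of_bool b - p) ^ card {i\<in>J. v \<in> B i}"] p0 p1
    by (simp add: mu_def)
qed

lemma E_xi_bound:
  assumes J: "finite J" and B: "\<forall>i\<in>J. B i \<subseteq> {1..N}" and ne: "\<forall>i\<in>J. B i \<noteq> {}"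
  shows "\<bar>measure_pmf.expectation Pm (\<lambda>x. \<Prod>i\<in>J. xiB x (B i))\<bar>
     \<le> of_bool (\<forall>j\<in>J. \<exists>i\<in>J. i \<noteq> j \<and> B i \<inter> B j \<noteq> {}) * q ^ card (\<Union>i\<in>J. B i)"
proof -
  define c where "c v = card {i\<in>J. v \<in> B i}" for v
  have E: "measure_pmf.expectation Pm (\<lambda>x. \<Prod>i\<in>J. xiB x (B i)) = (\<Prod>v\<in>{1..N}. mu (c v))"
    unfolding c_def by (rule E_xi_prod[OF J B])
  show ?thesis
  proof (cases "\<exists>v\<in>{1..N}. c v = 1")
    case True
    then obtain v where v: "v \<in> {1..N}" "c v = 1" by auto
    have Z: "(\<Prod>v\<in>{1..N}. mu (c v)) = 0" by (intro prod_zero) (use v in \<open>auto simp: mu1 intro!: bexI[of _ v]\<close>)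
    show ?thesis unfolding E Z using q0 by simp
  next
    case False
    have cond: "\<forall>j\<in>J. \<exists>i\<in>J. i \<noteq> j \<and> B i \<inter> B j \<noteq> {}"
    proof
      fix j assume j: "j \<in> J"
      then obtain v where v: "v \<in> B j" using ne by auto
      have vN: "v \<in> {1..N}" using v j B by blast
      have "j \<in> {i\<in>J. v \<in> B i}" using j v by auto
      hence "c v \<noteq> 0" unfolding c_def using J by auto
      moreover have "c v \<noteq> 1" using False vN by blast
        ultimately have "c v \<ge> 2" by linarith
      hence "\<not> {i\<in>J. v \<in> B i} \<subseteq> {j}"
        unfolding c_def using card_mono[of "{j}" "{i\<in>J. v \<in> B i}"] by auto
      then obtain i where "i \<in> J" "v \<in> B i" "i \<noteq> j" by auto
      thus "\<exists>i\<in>J. i \<noteq> j \<and> B i \<inter> B j \<noteq> {}" using v by auto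
    qed
    have "\<bar>\<Prod>v\<in>{1..N}. mu (c v)\<bar> = (\<Prod>v\<in>{1..N}. \<bar>mu (c v)\<bar>)" by (rule abs_prod)
    also have "\<dots> \<le> (\<Prod>v\<in>{1..N}. if v \<in> (\<Union>i\<in>J. B i) then q else 1)"
    proof (rule prod_mono, rule conjI)
      fix v assume vN: "v \<in> {1..N}"
      show "0 \<le> \<bar>mu (c v)\<bar>" by simp
      show "\<bar>mu (c v)\<bar> \<le> (if v \<in> (\<Union>i\<in>J. B i) then q else 1)"
      proof (cases "v \<in> (\<Union>i\<in>J. B i)")
        case True
        hence "c v \<noteq> 0" unfolding c_def using J by auto
        moreover have "c v \<noteq> 1" using False vN by blast
        ultimately have "c v \<ge> 2" by linarith
        thus ?thesis using True mu_bound by simp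
      next
        case nv: False
        hence "c v = 0" unfolding c_def by (simp add: card_eq_0_iff)
        thus ?thesis using nv by (simp add: mu0)
      qed
    qed
    also have "\<dots> = q ^ card (\<Union>i\<in>J. B i)"
    proof -
      have "(\<Prod>v\<in>{1..N}. if v \<in> (\<Union>i\<in>J. B i) then q else 1) = (\<Prod>v\<in>(\<Union>i\<in>J. B i). if v \<in> (\<Union>i\<in>J. B i) then q else 1)"
        by (rule prod.mono_neutral_right) (use B in auto)
      thus ?thesis by simp
    qed
    finally show ?thesis unfolding E using cond by simp
  qed
qed

lemma E_xi_pair:
  assumes "S1 \<subseteq> {1..N}" "S2 \<subseteq> {1..N}"
  shows "measure_pmf.expectation Pm (\<lambda>x. xiB x S1 * xiB x S2) = of_bool (S1 = S2) * q ^ card S1"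
proof -
  define B where "B i = (if i = (0::nat) then S1 else S2)" for i
  have eq: "(\<lambda>x. xiB x S1 * xiB x S2) = (\<lambda>x. \<Prod>i\<in>{0,1}. xiB x (B i))" by (simp add: B_def)
  have cnt: "card {i\<in>{0::nat,1}. v \<in> B i} = of_bool (v \<in> S1) + of_bool (v \<in> S2)" for v
  proof -
    have "{i\<in>{0::nat,1}. v \<in> B i} = (if v \<in> S1 then {0} else {}) \<union> (if v \<in> S2 then {1} else {})"
      by (auto simp: B_def)
    thus ?thesis by auto
  qed
  have E: "measure_pmf.expectation Pm (\<lambda>x. xiB x S1 * xiB x S2) = (\<Prod>v\<in>{1..N}. mu (of_bool (v \<in> S1) + of_bool (v \<in> S2)))"
  proof -
    have "measure_pmf.expectation Pm (\<lambda>x. xiB x S1 * xiB x S2) = (\<Prod>v\<in>{1..N}. mu (card {i\<in>{0::nat,1}. v \<in> B i}))"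
      unfolding eq by (rule E_xi_prod) (use assms in \<open>auto simp: B_def\<close>)
    thus ?thesis by (simp only: cnt)
  qed
  show ?thesis
  proof (cases "S1 = S2")
    case True
    have "(\<Prod>v\<in>{1..N}. mu (of_bool (v \<in> S1) + of_bool (v \<in> S2))) = (\<Prod>v\<in>{1..N}. if v \<in> S1 then q else 1)"
      using True by (intro prod.cong) (auto simp: mu0 mu2[unfolded numeral_2_eq_2])
    also have "\<dots> = (\<Prod>v\<in>S1. if v \<in> S1 then q else 1)"
      by (rule prod.mono_neutral_right) (use assms in auto)
    also have "\<dots> = q ^ card S1" by simp
    finally show ?thesis using E True by simp
  next
    case False
    then obtain v where "v \<in> S1 - S2 \<or> v \<in> S2 - S1" by blast
    hence "v \<in> {1..N}" "of_bool (v \<in> S1) + of_bool (v \<in> S2) = (1::nat)" using assms by auto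
    hence "(\<Prod>v\<in>{1..N}. mu (of_bool (v \<in> S1) + of_bool (v \<in> S2))) = 0"
      by (intro prod_zero) (auto simp: mu1 intro!: bexI[of _ v])
    thus ?thesis using E False by simp
  qed
qed

end



context setting
begin

abbreviation T where "T \<equiv> tuples h N"
definition img :: "(nat \<Rightarrow> nat) \<Rightarrow> nat set" where "img s = s ` {..<h}"
definition Pc :: "((nat \<Rightarrow> nat) \<times> nat set) set" where "Pc = Sigma T (\<lambda>s. Pow (img s) - {{}})"
definition phi :: "((nat \<Rightarrow> nat) \<Rightarrow> real) \<Rightarrow> (nat \<Rightarrow> nat) \<times> nat set \<Rightarrow> real" where
  "phi c \<pi> = c (fst \<pi>) * p ^ (h - card (snd \<pi>))"

lemma E_sum: "measure_pmf.expectation Pm (\<lambda>x. \<Sum>i\<in>I. (f i x :: real)) = (\<Sum>i\<in>I. measure_pmf.expectation Pm (f i))"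
  by (rule Bochner_Integration.integral_sum) (rule integrable_measure_pmf_finite[OF vp_finite])

lemma finite_T: "finite T"
proof -
  have "T \<subseteq> {..<h} \<rightarrow>\<^sub>E {1..N}" unfolding tuples_def by auto
  moreover have "finite ({..<h} \<rightarrow>\<^sub>E {1..N})" by (intro finite_PiE) auto
  ultimately show ?thesis by (rule finite_subset)
qed

lemma img_sub: "s \<in> T \<Longrightarrow> img s \<subseteq> {1..N}"
  unfolding img_def tuples_def by auto

lemma card_img: "s \<in> T \<Longrightarrow> card (img s) = h"
  unfolding img_def tuples_def by (auto simp: card_image)

lemma finite_img: "finite (img s)"
  unfolding img_def by simp

lemma finite_Pc: "finite Pc"
  unfolding Pc_def using finite_T finite_img by auto

lemma Pc_sub: assumes "\<pi> \<in> Pc" shows "snd \<pi> \<subseteq> {1..N}"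
proof -
  have "fst \<pi> \<in> T" "snd \<pi> \<subseteq> img (fst \<pi>)" using assms unfolding Pc_def by auto
  thus ?thesis using img_sub by blast
qed

lemma Pc_card: assumes "\<pi> \<in> Pc" shows "card (snd \<pi>) \<le> h"
proof -
  have "fst \<pi> \<in> T" "snd \<pi> \<subseteq> img (fst \<pi>)" using assms unfolding Pc_def by auto
  thus ?thesis using card_img card_mono[OF finite_img] by metis
qed

lemma Pc_ne: assumes "\<pi> \<in> Pc" shows "snd \<pi> \<noteq> {}"
  using assms unfolding Pc_def by auto

lemma X_img: "s \<in> T \<Longrightarrow> X_tuple h x s = (\<Prod>v\<in>img s. of_bool (x v))"
  unfolding X_tuple_def img_def tuples_def by (subst prod.reindex) auto

lemma X_expand:
  assumes s: "s \<in> T"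
  shows "X_tuple h x s = (\<Sum>B\<in>Pow (img s). p ^ (h - card B) * xiB x B)"
proof -
  have "X_tuple h x s = (\<Prod>v\<in>img s. xi x v + p)" unfolding X_img[OF s] xi_def by simp
  also have "\<dots> = (\<Sum>B\<in>Pow (img s). prod (xi x) B * prod (\<lambda>_. p) (img s - B))"
    by (rule prod_add[OF finite_img])
  also have "\<dots> = (\<Sum>B\<in>Pow (img s). p ^ (h - card B) * xiB x B)"
  proof (rule sum.cong[OF refl])
    fix B assume "B \<in> Pow (img s)"
    hence "card (img s - B) = h - card B" using card_img[OF s] finite_img
      by (simp add: card_Diff_subset finite_subset)
    thus "prod (xi x) B * prod (\<lambda>_. p) (img s - B) = p ^ (h - card B) * xiB x B"
      by (simp add: xiB_def)
  qed
  finally show ?thesis .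
qed

lemma E_xiB:
  assumes "B \<subseteq> {1..N}"
  shows "measure_pmf.expectation Pm (\<lambda>x. xiB x B) = of_bool (B = {})"
proof -
  have "measure_pmf.expectation Pm (\<lambda>x. xiB x B) = (\<Prod>v\<in>B. p * (1 - p) + (1 - p) * (0 - p))"
    unfolding xiB_def xi_def using exp_vp_prod[OF assms, of p "\<lambda>v b. of_bool b - p"] p0 p1 by simp
  also have "\<dots> = (\<Prod>v\<in>B. 0)" by (simp add: algebra_simps)
  also have "\<dots> = of_bool (B = {})" using finite_subset[OF assms] by auto
  finally show ?thesis .
qed

lemma Z_expand:
  assumes s: "s \<in> T"
  shows "X_tuple h x s - p ^ h = (\<Sum>B\<in>Pow (img s) - {{}}. p ^ (h - card B) * xiB x B)"
proof -
  have "X_tuple h x s = p ^ (h - card {}) * xiB x {} + (\<Sum>B\<in>Pow (img s) - {{}}. p ^ (h - card B) * xiB x B)"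
    unfolding X_expand[OF s] by (subst sum.remove[of "Pow (img s)" "{}"]) (auto simp: finite_img)
  thus ?thesis by (simp add: xiB_def)
qed

lemma E_X: assumes s: "s \<in> T" shows "measure_pmf.expectation Pm (\<lambda>x. X_tuple h x s) = p ^ h"
proof -
  have "measure_pmf.expectation Pm (\<lambda>x. X_tuple h x s - p ^ h)
      = (\<Sum>B\<in>Pow (img s) - {{}}. p ^ (h - card B) * measure_pmf.expectation Pm (\<lambda>x. xiB x B))"
    unfolding Z_expand[OF s] E_sum by simp
  also have "\<dots> = 0" using img_sub[OF s] by (intro sum.neutral) (auto simp: E_xiB)
  finally have "measure_pmf.expectation Pm (\<lambda>x. X_tuple h x s - p ^ h) = 0" .
  moreover have "measure_pmf.expectation Pm (\<lambda>x. X_tuple h x s - p ^ h) = measure_pmf.expectation Pm (\<lambda>x. X_tuple h x s) - p ^ h"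
    by (subst Bochner_Integration.integral_diff) (auto simp: vp_integrable)
  ultimately show ?thesis by simp
qed

lemma center:
  "(\<Sum>s\<in>T. c s * X_tuple h x s) - measure_pmf.expectation Pm (\<lambda>x. \<Sum>s\<in>T. c s * X_tuple h x s)
   = (\<Sum>\<pi>\<in>Pc. phi c \<pi> * xiB x (snd \<pi>))"
proof -
  have "measure_pmf.expectation Pm (\<lambda>x. \<Sum>s\<in>T. c s * X_tuple h x s) = (\<Sum>s\<in>T. c s * p ^ h)"
    unfolding E_sum by (simp add: E_X)
  have "(\<Sum>s\<in>T. c s * X_tuple h x s) - measure_pmf.expectation Pm (\<lambda>x. \<Sum>s\<in>T. c s * X_tuple h x s)
      = (\<Sum>s\<in>T. c s * (X_tuple h x s - p ^ h))"
  proof -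
    have "(\<Sum>s\<in>T. c s * (X_tuple h x s - p ^ h)) = (\<Sum>s\<in>T. c s * X_tuple h x s - c s * p ^ h)"
      by (simp add: right_diff_distrib)
    also have "\<dots> = (\<Sum>s\<in>T. c s * X_tuple h x s) - (\<Sum>s\<in>T. c s * p ^ h)"
      by (rule sum_subtractf)
    finally show ?thesis using \<open>measure_pmf.expectation Pm (\<lambda>x. \<Sum>s\<in>T. c s * X_tuple h x s) = (\<Sum>s\<in>T. c s * p ^ h)\<close> by simp
  qed
  also have "\<dots> = (\<Sum>s\<in>T. \<Sum>B\<in>Pow (img s) - {{}}. phi c (s, B) * xiB x B)"
  proof (rule sum.cong[OF refl])
    fix s assume s: "s \<in> T"
    show "c s * (X_tuple h x s - p ^ h) = (\<Sum>B\<in>Pow (img s) - {{}}. phi c (s, B) * xiB x B)"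
      unfolding Z_expand[OF s] sum_distrib_left phi_def by (simp add: mult.assoc)
  qed
  also have "\<dots> = (\<Sum>\<pi>\<in>Pc. phi c \<pi> * xiB x (snd \<pi>))"
    unfolding Pc_def by (subst sum.Sigma) (auto simp: finite_T finite_img case_prod_unfold)
  finally show ?thesis .
qed

lemma moment_expand:
  assumes "finite P'"
  shows "measure_pmf.expectation Pm (\<lambda>x. (\<Sum>\<pi>\<in>P'. a \<pi> * xiB x (S \<pi>)) ^ R)
    = (\<Sum>\<sigma>\<in>PiE {..<R} (\<lambda>_. P'). (\<Prod>i<R. a (\<sigma> i)) * measure_pmf.expectation Pm (\<lambda>x. \<Prod>i<R. xiB x (S (\<sigma> i))))"
proof -
  have "(\<lambda>x. (\<Sum>\<pi>\<in>P'. a \<pi> * xiB x (S \<pi>)) ^ R)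
      = (\<lambda>x. \<Sum>\<sigma>\<in>PiE {..<R} (\<lambda>_. P'). (\<Prod>i<R. a (\<sigma> i)) * (\<Prod>i<R. xiB x (S (\<sigma> i))))"
  proof
    fix x
    have "(\<Sum>\<pi>\<in>P'. a \<pi> * xiB x (S \<pi>)) ^ R = (\<Prod>i<R. \<Sum>\<pi>\<in>P'. a \<pi> * xiB x (S \<pi>))" by simp
    also have "\<dots> = (\<Sum>\<sigma>\<in>PiE {..<R} (\<lambda>_. P'). \<Prod>i<R. a (\<sigma> i) * xiB x (S (\<sigma> i)))"
      by (rule prod_sum_PiE) (use assms in auto)
    finally show "(\<Sum>\<pi>\<in>P'. a \<pi> * xiB x (S \<pi>)) ^ R = (\<Sum>\<sigma>\<in>PiE {..<R} (\<lambda>_. P'). (\<Prod>i<R. a (\<sigma> i)) * (\<Prod>i<R. xiB x (S (\<sigma> i))))"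
      by (simp add: prod.distrib)
  qed
  hence "measure_pmf.expectation Pm (\<lambda>x. (\<Sum>\<pi>\<in>P'. a \<pi> * xiB x (S \<pi>)) ^ R)
    = (\<Sum>\<sigma>\<in>PiE {..<R} (\<lambda>_. P'). measure_pmf.expectation Pm (\<lambda>x. (\<Prod>i<R. a (\<sigma> i)) * (\<Prod>i<R. xiB x (S (\<sigma> i)))))"
    by (simp only: E_sum)
  thus ?thesis by simp
qed


end



locale inst = setting +
  fixes EH :: "nat \<Rightarrow> nat \<Rightarrow> bool" and a :: "nat \<Rightarrow> nat \<Rightarrow> bool" and M :: real
  assumes M0: "0 < M" and V0: "0 < varT h EH N a p"
begin

definition aut :: real where "aut = real (aut_card h EH)"
definition u :: "(nat \<Rightarrow> nat) \<Rightarrow> real" where "u s = hom_weight h EH a s / aut"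
definition w :: "(nat \<Rightarrow> nat) \<Rightarrow> real" where "w s = u s * of_bool (good_tuple M h EH N a p s)"
abbreviation V where "V \<equiv> varT h EH N a p"

lemma aut_pos: "0 < aut"
proof -
  have fin: "finite {\<sigma>. \<sigma> permutes {..<h} \<and> (\<forall>i<h. \<forall>j<h. EH (\<sigma> i) (\<sigma> j) \<longleftrightarrow> EH i j)}"
    by (rule finite_subset[OF _ finite_permutations[of "{..<h}"]]) auto
  have "id \<in> {\<sigma>. \<sigma> permutes {..<h} \<and> (\<forall>i<h. \<forall>j<h. EH (\<sigma> i) (\<sigma> j) \<longleftrightarrow> EH i j)}" by simp
  hence "card {\<sigma>. \<sigma> permutes {..<h} \<and> (\<forall>i<h. \<forall>j<h. EH (\<sigma> i) (\<sigma> j) \<longleftrightarrow> EH i j)} > 0"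
    using fin card_gt_0_iff by blast
  thus ?thesis unfolding aut_def aut_card_def by simp
qed

lemma hw_nn: "0 \<le> hom_weight h EH a s"
  unfolding hom_weight_def by (intro prod_nonneg) (auto simp: case_prod_unfold)

lemma u_nn: "0 \<le> u s" unfolding u_def using hw_nn aut_pos by simp
lemma w_nn: "0 \<le> w s" unfolding w_def using u_nn by simp
lemma w_le_u: "w s \<le> u s" unfolding w_def using u_nn by simp

lemma T_count_eq: "T_count h EH N a = (\<lambda>x. \<Sum>s\<in>T. u s * X_tuple h x s)"
  unfolding T_count_def u_def aut_def by (auto simp: sum_distrib_left)

lemma T_trunc_eq: "T_trunc M h EH N a p = (\<lambda>x. \<Sum>s\<in>T. w s * X_tuple h x s)"
  unfolding T_trunc_def w_def u_def aut_def by (auto simp: sum_distrib_left mult_ac intro!: sum.cong)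

definition Du :: "nat set \<Rightarrow> real" where "Du I = (\<Sum>\<pi>\<in>{\<pi>\<in>Pc. snd \<pi> = I}. phi u \<pi>)"

lemma V_expand:
  "V = (\<Sum>\<pi>1\<in>Pc. \<Sum>\<pi>2\<in>Pc. phi u \<pi>1 * phi u \<pi>2 * (of_bool (snd \<pi>1 = snd \<pi>2) * q ^ card (snd \<pi>1)))"
proof -
  have "V = measure_pmf.expectation Pm (\<lambda>x. (\<Sum>\<pi>\<in>Pc. phi u \<pi> * xiB x (snd \<pi>))^2)"
    unfolding varT_def T_count_eq center ..
  also have "\<dots> = measure_pmf.expectation Pm (\<lambda>x. \<Sum>\<pi>1\<in>Pc. \<Sum>\<pi>2\<in>Pc. phi u \<pi>1 * phi u \<pi>2 * (xiB x (snd \<pi>1) * xiB x (snd \<pi>2)))"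
    by (simp add: power2_eq_square sum_product mult_ac)
  also have "\<dots> = (\<Sum>\<pi>1\<in>Pc. \<Sum>\<pi>2\<in>Pc. phi u \<pi>1 * phi u \<pi>2 * measure_pmf.expectation Pm (\<lambda>x. xiB x (snd \<pi>1) * xiB x (snd \<pi>2)))"
    by (simp add: E_sum)
  also have "\<dots> = (\<Sum>\<pi>1\<in>Pc. \<Sum>\<pi>2\<in>Pc. phi u \<pi>1 * phi u \<pi>2 * (of_bool (snd \<pi>1 = snd \<pi>2) * q ^ card (snd \<pi>1)))"
  proof (intro sum.cong refl)
    fix \<pi>1 \<pi>2 assume "\<pi>1 \<in> Pc" "\<pi>2 \<in> Pc"
    thus "phi u \<pi>1 * phi u \<pi>2 * measure_pmf.expectation Pm (\<lambda>x. xiB x (snd \<pi>1) * xiB x (snd \<pi>2))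
        = phi u \<pi>1 * phi u \<pi>2 * (of_bool (snd \<pi>1 = snd \<pi>2) * q ^ card (snd \<pi>1))"
      by (simp only: E_xi_pair[OF Pc_sub Pc_sub])
  qed
  finally show ?thesis .
qed

lemma V_Du: "V = (\<Sum>I\<in>Pow {1..N} - {{}}. q ^ card I * Du I ^ 2)"
proof -
  define g where "g \<pi>1 = (\<Sum>\<pi>2\<in>Pc. phi u \<pi>1 * phi u \<pi>2 * (of_bool (snd \<pi>1 = snd \<pi>2) * q ^ card (snd \<pi>1)))" for \<pi>1
  have "V = sum g Pc" unfolding V_expand g_def ..
  also have "\<dots> = (\<Sum>I\<in>Pow {1..N} - {{}}. \<Sum>\<pi>1\<in>{\<pi>\<in>Pc. snd \<pi> = I}. g \<pi>1)"
    by (rule sum.group[symmetric]) (use finite_Pc Pc_sub Pc_ne in auto)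
  also have "\<dots> = (\<Sum>I\<in>Pow {1..N} - {{}}. q ^ card I * Du I ^ 2)"
  proof (rule sum.cong[OF refl])
    fix I assume I: "I \<in> Pow {1..N} - {{}}"
    have "(\<Sum>\<pi>1\<in>{\<pi>\<in>Pc. snd \<pi> = I}. g \<pi>1)
        = (\<Sum>\<pi>1\<in>{\<pi>\<in>Pc. snd \<pi> = I}. \<Sum>\<pi>2\<in>{\<pi>\<in>Pc. snd \<pi> = I}. q ^ card I * (phi u \<pi>1 * phi u \<pi>2))"
    proof (rule sum.cong[OF refl])
      fix \<pi>1 assume \<pi>1: "\<pi>1 \<in> {\<pi>\<in>Pc. snd \<pi> = I}"
      have "g \<pi>1 = (\<Sum>\<pi>2\<in>Pc. if snd \<pi>2 = I then q ^ card I * (phi u \<pi>1 * phi u \<pi>2) else 0)"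
        unfolding g_def using \<pi>1 by (intro sum.cong refl) (auto simp: mult_ac)
      also have "\<dots> = (\<Sum>\<pi>2\<in>{\<pi>\<in>Pc. snd \<pi> = I}. q ^ card I * (phi u \<pi>1 * phi u \<pi>2))"
        by (simp only: sum.inter_filter[OF finite_Pc])
      finally show "g \<pi>1 = \<dots>" .
    qed
    also have "\<dots> = q ^ card I * Du I ^ 2" unfolding Du_def by (rule sum_sq_aux)
    finally show "(\<Sum>\<pi>1\<in>{\<pi>\<in>Pc. snd \<pi> = I}. g \<pi>1) = q ^ card I * Du I ^ 2" .
  qed
  finally show ?thesis .
qed


lemma Du_eq: assumes I: "I \<noteq> {}"
  shows "Du I = p ^ (h - card I) * (\<Sum>s\<in>{s\<in>T. I \<subseteq> img s}. u s)"
proof -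
  have eq: "{\<pi>\<in>Pc. snd \<pi> = I} = (\<lambda>s. (s, I)) ` {s\<in>T. I \<subseteq> img s}"
    using I unfolding Pc_def by auto
  have "Du I = (\<Sum>s\<in>{s\<in>T. I \<subseteq> img s}. phi u (s, I))"
    unfolding Du_def eq by (subst sum.reindex) (auto simp: inj_on_def)
  thus ?thesis by (simp add: phi_def sum_distrib_left mult_ac)
qed

definition Gw :: "nat set \<Rightarrow> real" where
  "Gw I = (\<Sum>\<pi>\<in>{\<pi>\<in>Pc. I \<subseteq> snd \<pi>}. phi w \<pi> * q ^ card (snd \<pi> - I))"

lemma Gw_nn: "0 \<le> Gw I"
  unfolding Gw_def phi_def using w_nn p0 q0 by (intro sum_nonneg) auto

lemma q_le_p: "q \<le> p" unfolding q_def using p0 p1 by (simp add: mult_left_le)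

lemma Gw_le: assumes I: "I \<noteq> {}"
  shows "Gw I \<le> 2 ^ h * (p ^ (h - card I) * (\<Sum>s\<in>{s\<in>T. I \<subseteq> img s}. w s))"
proof -
  have "Gw I \<le> (\<Sum>\<pi>\<in>{\<pi>\<in>Pc. I \<subseteq> snd \<pi>}. w (fst \<pi>) * p ^ (h - card I))"
    unfolding Gw_def
  proof (rule sum_mono)
    fix \<pi> assume \<pi>: "\<pi> \<in> {\<pi>\<in>Pc. I \<subseteq> snd \<pi>}"
    have fin: "finite (snd \<pi>)" using \<pi> Pc_sub finite_subset by blast
    have c1: "card I \<le> card (snd \<pi>)" using \<pi> fin by (auto intro: card_mono)
    have c2: "card (snd \<pi>) \<le> h" using \<pi> Pc_card by auto
    have cd: "card (snd \<pi> - I) = card (snd \<pi>) - card I" using \<pi> fin by (auto simp: card_Diff_subset finite_subset)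
    have "q ^ card (snd \<pi> - I) \<le> p ^ card (snd \<pi> - I)" using q0 q_le_p by (intro power_mono) auto
    hence "p ^ (h - card (snd \<pi>)) * q ^ card (snd \<pi> - I) \<le> p ^ (h - card (snd \<pi>)) * p ^ card (snd \<pi> - I)"
      using p0 by (intro mult_left_mono) auto
    also have "\<dots> = p ^ (h - card I)"
    proof -
      have e: "h - card (snd \<pi>) + (card (snd \<pi>) - card I) = h - card I" using c1 c2 by linarith
      show ?thesis unfolding cd by (simp only: power_add[symmetric] e)
    qed
    finally show "phi w \<pi> * q ^ card (snd \<pi> - I) \<le> w (fst \<pi>) * p ^ (h - card I)"
      unfolding phi_def using w_nn by (simp add: mult.assoc mult_left_mono)
  qed
  also have "\<dots> = (\<Sum>s\<in>T. \<Sum>B\<in>{B\<in>Pow (img s) - {{}}. I \<subseteq> B}. w s * p ^ (h - card I))"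
  proof -
    have "{\<pi>\<in>Pc. I \<subseteq> snd \<pi>} = Sigma T (\<lambda>s. {B\<in>Pow (img s) - {{}}. I \<subseteq> B})" unfolding Pc_def by auto
    moreover have "(\<Sum>s\<in>T. \<Sum>B\<in>{B\<in>Pow (img s) - {{}}. I \<subseteq> B}. w s * p ^ (h - card I))
        = (\<Sum>(s,B)\<in>Sigma T (\<lambda>s. {B\<in>Pow (img s) - {{}}. I \<subseteq> B}). w s * p ^ (h - card I))"
      by (rule sum.Sigma) (auto simp: finite_T finite_img)
    ultimately show ?thesis by (simp add: case_prod_unfold)
  qed
  also have "\<dots> \<le> (\<Sum>s\<in>T. of_bool (I \<subseteq> img s) * (2 ^ h * (w s * p ^ (h - card I))))"
  proof (rule sum_mono)
    fix s assume s: "s \<in> T"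
    have nn: "0 \<le> w s * p ^ (h - card I)" using w_nn p0 by simp
    show "(\<Sum>B\<in>{B\<in>Pow (img s) - {{}}. I \<subseteq> B}. w s * p ^ (h - card I)) \<le> of_bool (I \<subseteq> img s) * (2 ^ h * (w s * p ^ (h - card I)))"
    proof (cases "I \<subseteq> img s")
      case True
      have "card {B\<in>Pow (img s) - {{}}. I \<subseteq> B} \<le> card (Pow (img s))" by (rule card_mono) (auto simp: finite_img)
      also have "\<dots> = 2 ^ h" using card_img[OF s] by (simp add: card_Pow finite_img)
      finally have "real (card {B\<in>Pow (img s) - {{}}. I \<subseteq> B}) \<le> 2 ^ h" by (simp flip: of_nat_power)
      thus ?thesis using True nn by (simp add: mult_right_mono)
    next
      case False
      hence e: "{B\<in>Pow (img s) - {{}}. I \<subseteq> B} = {}" by auto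
      show ?thesis unfolding e using False by simp
    qed
  qed
  also have "\<dots> = 2 ^ h * (p ^ (h - card I) * (\<Sum>s\<in>{s\<in>T. I \<subseteq> img s}. w s))"
  proof -
    have "(\<Sum>s\<in>T. of_bool (I \<subseteq> img s) * (2 ^ h * (w s * p ^ (h - card I))))
        = (\<Sum>s\<in>T. of_bool (I \<subseteq> img s) * (w s * (2 ^ h * p ^ (h - card I))))"
      by (simp only: mult.left_commute)
    also have "\<dots> = (\<Sum>s\<in>{s\<in>T. I \<subseteq> img s}. w s) * (2 ^ h * p ^ (h - card I))"
      by (rule sum_filter_mult[OF finite_T])
    finally show ?thesis by (simp only: mult_ac)
  qed
  finally show ?thesis .
qed

lemma Vb_w: "(\<Sum>I\<in>Pow {1..N} - {{}}. q ^ card I * Gw I ^ 2) \<le> 4 ^ h * V"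
proof -
  have "(\<Sum>I\<in>Pow {1..N} - {{}}. q ^ card I * Gw I ^ 2) \<le> (\<Sum>I\<in>Pow {1..N} - {{}}. 4 ^ h * (q ^ card I * Du I ^ 2))"
  proof (rule sum_mono)
    fix I assume I: "I \<in> Pow {1..N} - {{}}"
    have "(\<Sum>s\<in>{s\<in>T. I \<subseteq> img s}. w s) \<le> (\<Sum>s\<in>{s\<in>T. I \<subseteq> img s}. u s)" by (intro sum_mono w_le_u)
    hence "Gw I \<le> 2 ^ h * Du I"
      using Gw_le[of I] I Du_eq[of I] p0 by (auto intro: order.trans mult_left_mono)
    hence "Gw I ^ 2 \<le> (2 ^ h * Du I) ^ 2" using Gw_nn by (intro power_mono) auto
    also have "\<dots> = 4 ^ h * Du I ^ 2" by (simp add: power_mult_distrib power_mult[symmetric] mult.commute[of h 2] power_mult)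
    finally show "q ^ card I * Gw I ^ 2 \<le> 4 ^ h * (q ^ card I * Du I ^ 2)"
      using q0 by (simp add: mult_left_mono mult.left_commute)
  qed
  also have "\<dots> = 4 ^ h * V" unfolding V_Du by (simp add: sum_distrib_left)
  finally show ?thesis .
qed


lemma tH_eq: "t_H h EH N a I = (\<Sum>s\<in>{s\<in>T. I \<subseteq> img s}. u s)"
  unfolding t_H_def u_def aut_def img_def by (simp add: sum_divide_distrib)

lemma Gam_w: assumes I: "I \<noteq> {}" shows "Gw I \<le> 2 ^ h * sqrt (M * V)"
proof -
  define Sw where "Sw = (\<Sum>s\<in>{s\<in>T. I \<subseteq> img s}. w s)"
  have Sw0: "0 \<le> Sw" unfolding Sw_def by (intro sum_nonneg w_nn)
  have key: "p ^ (h - card I) * Sw \<le> sqrt (M * V)"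
  proof (cases "\<exists>s\<in>T. I \<subseteq> img s \<and> good_tuple M h EH N a p s")
    case True
    then obtain s0 where s0: "s0 \<in> T" "I \<subseteq> img s0" "good_tuple M h EH N a p s0" by blast
    have kh: "card I \<le> h" using card_mono[OF finite_img s0(2)] card_img[OF s0(1)] by simp
    have "\<not> cond_C M h EH N a p I" using s0 I unfolding good_tuple_def img_def by blast
    hence tb: "(t_H h EH N a I)\<^sup>2 \<le> M * p powi (2 * int (card I) - 2 * int h) * V"
      unfolding cond_C_def by simp
    have pw: "p powi (2 * int (card I) - 2 * int h) = inverse (p ^ (2 * (h - card I)))"
    proof -
      have "2 * int (card I) - 2 * int h = - int (2 * (h - card I))" using kh by simp
      hence "p powi (2 * int (card I) - 2 * int h) = p powi (- int (2 * (h - card I)))" by (rule arg_cong)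
      also have "\<dots> = inverse (p powi int (2 * (h - card I)))" by (rule power_int_minus)
      also have "\<dots> = inverse (p ^ (2 * (h - card I)))" by (simp only: power_int_of_nat)
      finally show ?thesis .
    qed
    have Swt: "Sw \<le> t_H h EH N a I" unfolding Sw_def tH_eq by (intro sum_mono w_le_u)
    have "(p ^ (h - card I) * Sw)\<^sup>2 \<le> (p ^ (h - card I) * t_H h EH N a I)\<^sup>2"
      using Sw0 Swt p0 by (intro power_mono mult_left_mono) auto
    also have "\<dots> = p ^ (2 * (h - card I)) * (t_H h EH N a I)\<^sup>2"
    proof -
      have "(p ^ (h - card I))\<^sup>2 = p ^ (2 * (h - card I))"
        by (subst power_mult[symmetric]) (simp only: mult.commute)
      thus ?thesis by (simp only: power_mult_distrib)
    qed
    also have "\<dots> \<le> p ^ (2 * (h - card I)) * (M * p powi (2 * int (card I) - 2 * int h) * V)"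
      using tb p0 by (intro mult_left_mono) auto
    also have "\<dots> = M * V" unfolding pw using p0 by (simp add: field_simps)
    finally show ?thesis by (rule real_le_rsqrt)
  next
    case False
    hence "Sw = 0" unfolding Sw_def w_def by (intro sum.neutral) auto
    thus ?thesis using mult_pos_pos[OF M0 V0] by simp
  qed
  have "Gw I \<le> 2 ^ h * (p ^ (h - card I) * Sw)" using Gw_le[OF I] unfolding Sw_def .
  also have "\<dots> \<le> 2 ^ h * sqrt (M * V)" using key by simp
  finally show ?thesis .
qed

lemma moment_bound:
  "\<bar>measure_pmf.expectation Pm (\<lambda>x. ((T_trunc M h EH N a p x - measure_pmf.expectation Pm (T_trunc M h EH N a p))
        / sqrt V) ^ R)\<bar> \<le> Cb h R 0 * (2 ^ h * sqrt (max M 1)) ^ R"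
proof -
  define L where "L = 2 ^ h * sqrt (M * V)"
  define lam where "lam = 2 ^ h * sqrt (max M 1) * sqrt V"
  have V0': "0 < V" by (rule V0)
  interpret pc: pieces Pc snd "phi w" q L "4 ^ h * V" h "{1..N}"
  proof
    show "finite Pc" by (rule finite_Pc)
    show "finite {1..N}" by simp
    show "\<And>\<pi>. \<pi> \<in> Pc \<Longrightarrow> snd \<pi> \<subseteq> {1..N}" by (rule Pc_sub)
    show "\<And>\<pi>. \<pi> \<in> Pc \<Longrightarrow> card (snd \<pi>) \<le> h" by (rule Pc_card)
    show "\<And>\<pi>. \<pi> \<in> Pc \<Longrightarrow> 0 \<le> phi w \<pi>" unfolding phi_def using w_nn p0 by simp
    show "0 \<le> q" by (rule q0)
    show "q \<le> 1" by (rule q1)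
    show "0 \<le> L" unfolding L_def using M0 V0' by simp
    show "\<And>I. I \<noteq> {} \<Longrightarrow> (\<Sum>\<pi>\<in>{\<pi>\<in>Pc. I \<subseteq> snd \<pi>}. phi w \<pi> * q ^ card (snd \<pi> - I)) \<le> L"
      using Gam_w unfolding Gw_def L_def by simp
    show "(\<Sum>I\<in>Pow {1..N} - {{}}. q ^ card I * (\<Sum>\<pi>\<in>{\<pi>\<in>Pc. I \<subseteq> snd \<pi>}. phi w \<pi> * q ^ card (snd \<pi> - I))\<^sup>2) \<le> 4 ^ h * V"
      using Vb_w unfolding Gw_def .
  qed
  have lam0: "0 \<le> lam" unfolding lam_def using V0' by (intro mult_nonneg_nonneg) auto
  have Llam: "L \<le> lam"
  proof -
    have "M * V \<le> max M 1 * V" using V0' by (intro mult_right_mono) auto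
    hence "sqrt (M * V) \<le> sqrt (max M 1 * V)" by (rule real_sqrt_le_mono)
    hence "sqrt (M * V) \<le> sqrt (max M 1) * sqrt V" by (simp add: real_sqrt_mult)
    thus ?thesis unfolding L_def lam_def by (simp add: mult.assoc)
  qed
  have Vlam: "4 ^ h * V \<le> lam ^ 2"
  proof -
    have "lam ^ 2 = 4 ^ h * (max M 1 * V)" unfolding lam_def using V0'
      by (simp add: power_mult_distrib power_mult[symmetric] mult.commute[of h 2] power_mult)
    moreover have "1 * V \<le> max M 1 * V" using V0' by (intro mult_right_mono) auto
    ultimately show ?thesis by simp
  qed
  have Phi_b: "pc.Phi {..<R} {} \<le> Cb h R 0 * lam ^ R"
    using pc.Phi_bound[OF lam0 Llam Vlam, of "{..<R}" "{}" 0] by simp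
  define F where "F x = (\<Sum>\<pi>\<in>Pc. phi w \<pi> * xiB x (snd \<pi>))" for x
  have FT: "T_trunc M h EH N a p x - measure_pmf.expectation Pm (T_trunc M h EH N a p) = F x" for x
    unfolding T_trunc_eq F_def by (rule center)
  have EF: "measure_pmf.expectation Pm (\<lambda>x. F x ^ R)
      = (\<Sum>\<sigma>\<in>PiE {..<R} (\<lambda>_. Pc). (\<Prod>i<R. phi w (\<sigma> i)) * measure_pmf.expectation Pm (\<lambda>x. \<Prod>i<R. xiB x (snd (\<sigma> i))))"
    unfolding F_def by (rule moment_expand[OF finite_Pc])
  have "\<bar>measure_pmf.expectation Pm (\<lambda>x. F x ^ R)\<bar>
      \<le> (\<Sum>\<sigma>\<in>PiE {..<R} (\<lambda>_. Pc). \<bar>(\<Prod>i<R. phi w (\<sigma> i)) * measure_pmf.expectation Pm (\<lambda>x. \<Prod>i<R. xiB x (snd (\<sigma> i)))\<bar>)"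
    unfolding EF by (rule sum_abs)
  also have "\<dots> \<le> (\<Sum>\<sigma>\<in>PiE {..<R} (\<lambda>_. Pc). pc.G {..<R} {} \<sigma>)"
  proof (rule sum_mono)
    fix \<sigma> assume \<sigma>: "\<sigma> \<in> PiE {..<R} (\<lambda>_. Pc)"
    have nn: "0 \<le> (\<Prod>i<R. phi w (\<sigma> i))" using \<sigma> w_nn p0 unfolding phi_def by (intro prod_nonneg) auto
    have "\<bar>measure_pmf.expectation Pm (\<lambda>x. \<Prod>i<R. xiB x (snd (\<sigma> i)))\<bar>
        \<le> of_bool (\<forall>j\<in>{..<R}. \<exists>i\<in>{..<R}. i \<noteq> j \<and> snd (\<sigma> i) \<inter> snd (\<sigma> j) \<noteq> {}) * q ^ card (\<Union>i\<in>{..<R}. snd (\<sigma> i))"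
    proof (rule E_xi_bound)
      have \<sigma>i: "\<sigma> i \<in> Pc" if "i \<in> {..<R}" for i using \<sigma> that by auto
      show "\<forall>i\<in>{..<R}. snd (\<sigma> i) \<subseteq> {1..N}" using \<sigma>i Pc_sub by blast
      show "\<forall>i\<in>{..<R}. snd (\<sigma> i) \<noteq> {}" using \<sigma>i Pc_ne by blast
    qed simp
    hence "\<bar>(\<Prod>i<R. phi w (\<sigma> i)) * measure_pmf.expectation Pm (\<lambda>x. \<Prod>i<R. xiB x (snd (\<sigma> i)))\<bar>
        \<le> (\<Prod>i<R. phi w (\<sigma> i)) * (of_bool (\<forall>j\<in>{..<R}. \<exists>i\<in>{..<R}. i \<noteq> j \<and> snd (\<sigma> i) \<inter> snd (\<sigma> j) \<noteq> {}) * q ^ card (\<Union>i\<in>{..<R}. snd (\<sigma> i)))"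
      using nn by (simp add: abs_mult mult_left_mono)
    also have "\<dots> = pc.G {..<R} {} \<sigma>"
      unfolding pc.G_def pc.cnd_def pc.UU_def by (simp add: mult_ac)
    finally show "\<bar>(\<Prod>i<R. phi w (\<sigma> i)) * measure_pmf.expectation Pm (\<lambda>x. \<Prod>i<R. xiB x (snd (\<sigma> i)))\<bar> \<le> pc.G {..<R} {} \<sigma>" .
  qed
  also have "\<dots> = pc.Phi {..<R} {}" unfolding pc.Phi_def ..
  also have "\<dots> \<le> Cb h R 0 * lam ^ R" by (rule Phi_b)
  finally have EFb: "\<bar>measure_pmf.expectation Pm (\<lambda>x. F x ^ R)\<bar> \<le> Cb h R 0 * lam ^ R" .
  have "measure_pmf.expectation Pm (\<lambda>x. ((T_trunc M h EH N a p x - measure_pmf.expectation Pm (T_trunc M h EH N a p)) / sqrt V) ^ R)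
      = measure_pmf.expectation Pm (\<lambda>x. F x ^ R) / sqrt V ^ R"
    unfolding FT by (simp add: power_divide)
  hence "\<bar>measure_pmf.expectation Pm (\<lambda>x. ((T_trunc M h EH N a p x - measure_pmf.expectation Pm (T_trunc M h EH N a p)) / sqrt V) ^ R)\<bar>
      = \<bar>measure_pmf.expectation Pm (\<lambda>x. F x ^ R)\<bar> / sqrt V ^ R" using V0' by (simp add: abs_divide)
  also have "\<dots> \<le> Cb h R 0 * lam ^ R / sqrt V ^ R" using V0' EFb by (intro divide_right_mono) auto
  also have "\<dots> = Cb h R 0 * (2 ^ h * sqrt (max M 1)) ^ R"
    unfolding lam_def using V0' by (simp add: power_mult_distrib)
  finally show ?thesis .
qed

end



theorem lemma5p3:
  fixes h :: nat and EH :: "nat \<Rightarrow> nat \<Rightarrow> bool" and M :: real and R :: nat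
  assumes "connected_graph h EH" and "M > 0" and "R \<ge> 1"
  shows "\<exists>C::real. \<forall>(N::nat \<Rightarrow> nat) (a::nat \<Rightarrow> nat \<Rightarrow> nat \<Rightarrow> bool) (p::nat \<Rightarrow> real).
     (\<forall>n. simple_graph {1..N n} (a n)) \<longrightarrow>
     (\<forall>n. 0 < p n \<and> p n < 1) \<longrightarrow>
     limsup (\<lambda>n. ereal (p n)) < 1 \<longrightarrow>
     (\<forall>n. varT h EH (N n) (a n) (p n) > 0) \<longrightarrow>
     limsup (\<lambda>n. ereal \<bar>measure_pmf.expectation (vertex_pmf (N n) (p n))
        (\<lambda>x. ((T_trunc M h EH (N n) (a n) (p n) x
               - measure_pmf.expectation (vertex_pmf (N n) (p n)) (T_trunc M h EH (N n) (a n) (p n)))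
              / sqrt (varT h EH (N n) (a n) (p n))) ^ R)\<bar>) \<le> ereal C"
proof (intro exI allI impI)
  fix N :: "nat \<Rightarrow> nat" and a :: "nat \<Rightarrow> nat \<Rightarrow> nat \<Rightarrow> bool" and p :: "nat \<Rightarrow> real"
  assume pp: "\<forall>n. 0 < p n \<and> p n < 1" and VV: "\<forall>n. varT h EH (N n) (a n) (p n) > 0"
  have bnd: "\<bar>measure_pmf.expectation (vertex_pmf (N n) (p n))
        (\<lambda>x. ((T_trunc M h EH (N n) (a n) (p n) x
               - measure_pmf.expectation (vertex_pmf (N n) (p n)) (T_trunc M h EH (N n) (a n) (p n)))
              / sqrt (varT h EH (N n) (a n) (p n))) ^ R)\<bar> \<le> Cb h R 0 * (2 ^ h * sqrt (max M 1)) ^ R" for n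
  proof -
    have "inst h (N n) (p n) EH (a n) M"
      by (intro inst.intro setting.intro inst_axioms.intro) (use pp VV assms(2) in auto)
    thus ?thesis by (rule inst.moment_bound)
  qed
  show "limsup (\<lambda>n. ereal \<bar>measure_pmf.expectation (vertex_pmf (N n) (p n))
        (\<lambda>x. ((T_trunc M h EH (N n) (a n) (p n) x
               - measure_pmf.expectation (vertex_pmf (N n) (p n)) (T_trunc M h EH (N n) (a n) (p n)))
              / sqrt (varT h EH (N n) (a n) (p n))) ^ R)\<bar>) \<le> ereal (Cb h R 0 * (2 ^ h * sqrt (max M 1)) ^ R)"
    by (intro Limsup_bounded always_eventually allI) (simp add: bnd)
qed



end
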